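(* Let $q$ be a power of an odd prime with $q\equiv3\pmod4$, $d=4k+2$ with $k$ a positive integer, $S_0=\{x\in\mathbb F_q^d: x_1^2+\cdots+x_d^2=0\}$, and $A\subset S_0$ with $|A|\gg q^{d/2}$. Then $|\Delta(A)|\gg q$.
   Context: $\|x-y\|=\sum_{i}(x_i-y_i)^2$ and $\Delta(A)=\{\|x-y\|:x,y\in A\}$. $X\gg Y$ means $X\ge cY$ for a constant $c>0$ independent of $q$ (in the hypothesis, a sufficiently large such constant). *)

theory Defs
  imports "HOL-Algebra.Algebra" "HOL-Computational_Algebra.Primes"
begin

definition fvecs :: "('a, 'b) ring_scheme \<Rightarrow> nat \<Rightarrow> (nat \<Rightarrow> 'a) set" where
  "fvecs R d = ({..<d} \<rightarrow>\<^sub>E carrier R)"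

definition fsqdist :: "('a, 'b) ring_scheme \<Rightarrow> nat \<Rightarrow> (nat \<Rightarrow> 'a) \<Rightarrow> (nat \<Rightarrow> 'a) \<Rightarrow> 'a" where
  "fsqdist R d x y = finsum R (\<lambda>i. (x i \<ominus>\<^bsub>R\<^esub> y i) \<otimes>\<^bsub>R\<^esub> (x i \<ominus>\<^bsub>R\<^esub> y i)) {..<d}"

definition zero_sphere :: "('a, 'b) ring_scheme \<Rightarrow> nat \<Rightarrow> (nat \<Rightarrow> 'a) set" where
  "zero_sphere R d = {x \<in> fvecs R d. finsum R (\<lambda>i. x i \<otimes>\<^bsub>R\<^esub> x i) {..<d} = \<zero>\<^bsub>R\<^esub>}"

definition dist_set :: "('a, 'b) ring_scheme \<Rightarrow> nat \<Rightarrow> (nat \<Rightarrow> 'a) set \<Rightarrow> 'a set" where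
  "dist_set R d A = {fsqdist R d x y | x y. x \<in> A \<and> y \<in> A}"

end

theory Submission imports Defs begin

locale qfield = field R for R :: "('a,'b) ring_scheme" (structure) +
  assumes fin: "finite (carrier R)" and q3: "card (carrier R) mod 4 = 3"
begin

abbreviation "q \<equiv> card (carrier R)"

lemma q_odd: "odd q" using q3 by presburger

lemma q_ge3: "q \<ge> 3" using q3 by (metis mod_less_eq_dividend)

lemma two_ne_zero: "\<one> \<oplus> \<one> \<noteq> \<zero>"
proof
  assume h: "\<one> \<oplus> \<one> = \<zero>"
  have "add_pow R (order (add_monoid R)) \<one> = \<zero>"
    using add.pow_order_eq_1[of \<one>] by simp
  hence a: "add_pow R q \<one> = \<zero>" by (simp add: order_def)
  obtain m where m: "q = Suc (2*m)" using q_odd by (metis oddE Suc_eq_plus1 add.commute)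
  have "add_pow R (2*m) \<one> = add_pow R m (add_pow R (2::nat) \<one>)"
    by (simp add: add.nat_pow_pow mult.commute)
  also have "add_pow R (2::nat) \<one> = \<one> \<oplus> \<one>" by (simp add: numeral_2_eq_2)
  finally have "add_pow R (2*m) \<one> = \<zero>" using h by simp
  hence "add_pow R q \<one> = \<one>" using m by simp
  with a show False by simp
qed

lemma minus_one_nonsq: "x \<in> carrier R \<Longrightarrow> x \<otimes> x \<noteq> \<ominus> \<one>"
proof
  assume x: "x \<in> carrier R" and h: "x \<otimes> x = \<ominus> \<one>"
  have x0: "x \<noteq> \<zero>" using h two_ne_zero by (metis l_null one_closed r_neg zero_closed add.inv_eq_1_iff)
  have "x [^] card (Units R) = \<one>"
    using units_power_order_eq_one[of x] x x0 fin field_Units by auto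
  hence a: "x [^] (q - 1) = \<one>" using field_Units fin by (simp add: card_Diff_singleton)
  obtain m where m: "q - 1 = 2 * (2*m+1)"
  proof -
    have "q = 4 * (q div 4) + 3" using q3 by presburger
    hence "q - 1 = 2 * (2 * (q div 4) + 1)" by presburger
    thus ?thesis using that by blast
  qed
  have m1: "\<ominus>\<one> \<in> carrier R" by simp
  have sq: "(\<ominus>\<one>) [^] (2::nat) = \<one>"
    by (simp add: numeral_2_eq_2) algebra
  have "x [^] (q - 1) = x [^] ((2::nat) * (2*m+1))" using m by (simp only:)
  also have "\<dots> = (x [^] (2::nat)) [^] (2*m+1)" using x by (simp only: nat_pow_pow)
  also have "x [^] (2::nat) = \<ominus>\<one>" using h x by (simp add: numeral_2_eq_2)
  also have "(\<ominus>\<one>) [^] (2*m+1) = ((\<ominus>\<one>) [^] (2::nat)) [^] m \<otimes> \<ominus>\<one>"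
    using m1 by (simp add: nat_pow_pow nat_pow_mult[symmetric] mult.commute)
  also have "\<dots> = \<ominus>\<one>" using sq by simp
  finally have "\<ominus>\<one> = \<one>" using a by simp
  hence "\<one> \<oplus> \<one> = \<zero>" by (metis l_neg one_closed)
  with two_ne_zero show False by simp
qed

lemma sq_eq: "a \<in> carrier R \<Longrightarrow> b \<in> carrier R \<Longrightarrow> a \<otimes> a = b \<otimes> b \<Longrightarrow> a = b \<or> a = \<ominus> b"
proof -
  assume a: "a \<in> carrier R" and b: "b \<in> carrier R" and h: "a \<otimes> a = b \<otimes> b"
  have "(a \<ominus> b) \<otimes> (a \<oplus> b) = a \<otimes> a \<ominus> b \<otimes> b" using a b by algebra
  also have "\<dots> = \<zero>" using h a b by simp
  finally have "a \<ominus> b = \<zero> \<or> a \<oplus> b = \<zero>" using a b integral by blast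
  moreover have "a \<ominus> b = \<zero> \<Longrightarrow> a = b"
  proof -
    assume "a \<ominus> b = \<zero>"
    hence "a \<oplus> \<ominus> b = \<zero>" by (simp add: a_minus_def)
    hence "\<ominus> (\<ominus> b) = a" using minus_equality[of a "\<ominus> b"] a b by simp
    thus "a = b" using b by simp
  qed
  moreover have "a \<oplus> b = \<zero> \<Longrightarrow> a = \<ominus> b"
    using minus_equality[of a b] a b by simp
  ultimately show ?thesis by blast
qed

lemma sum_two_squares: assumes e: "e \<in> carrier R" shows "\<exists>a\<in>carrier R. \<exists>b\<in>carrier R. a \<otimes> a \<oplus> b \<otimes> b = e"
proof (rule ccontr)
  assume nex: "\<not> (\<exists>a\<in>carrier R. \<exists>b\<in>carrier R. a \<otimes> a \<oplus> b \<otimes> b = e)"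
  define S where "S = (\<lambda>x. x \<otimes> x) ` carrier R"
  define r where "r = (\<lambda>s. SOME y. y \<in> carrier R \<and> y \<otimes> y = s)"
  have r: "r s \<in> carrier R \<and> r s \<otimes> r s = s" if sS: "s \<in> S" for s
  proof -
    obtain y where "y \<in> carrier R" "y \<otimes> y = s" using sS unfolding S_def by blast
    thus ?thesis unfolding r_def by (rule someI[where P="\<lambda>y. y \<in> carrier R \<and> y \<otimes> y = s", OF conjI])
  qed
  have sub: "carrier R \<subseteq> r ` S \<union> (\<lambda>y. \<ominus> y) ` (r ` S)"
  proof
    fix x assume x: "x \<in> carrier R"
    have xs: "x \<otimes> x \<in> S" using x S_def by auto
    from r[OF xs] sq_eq[OF x, of "r (x \<otimes> x)"]
    have "x = r (x \<otimes> x) \<or> x = \<ominus> r (x \<otimes> x)" by metis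
    thus "x \<in> r ` S \<union> (\<lambda>y. \<ominus> y) ` (r ` S)" using xs by auto
  qed
  have fS: "finite S" using fin S_def by simp
  have "q \<le> card (r ` S \<union> (\<lambda>y. \<ominus> y) ` (r ` S))"
    using sub fS by (intro card_mono) auto
  also have "\<dots> \<le> card (r ` S) + card ((\<lambda>y. \<ominus> y) ` (r ` S))" by (rule card_Un_le)
  also have "\<dots> \<le> 2 * card S" using card_image_le[OF fS, of r] card_image_le[of "r ` S" "\<lambda>y. \<ominus> y"] fS by simp
  finally have qS: "q \<le> 2 * card S" .
  define T where "T = (\<lambda>s. e \<ominus> s) ` S"
  have Sc: "S \<subseteq> carrier R" using S_def by auto
  have injT: "inj_on (\<lambda>s. e \<ominus> s) S"
  proof (rule inj_onI)
    fix x y assume "x \<in> S" "y \<in> S" "e \<ominus> x = e \<ominus> y"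
    moreover have "x \<in> carrier R" "y \<in> carrier R" using Sc \<open>x \<in> S\<close> \<open>y \<in> S\<close> by auto
    moreover have "x = e \<ominus> (e \<ominus> x)" using e \<open>x \<in> carrier R\<close> by algebra
    moreover have "y = e \<ominus> (e \<ominus> y)" using e \<open>y \<in> carrier R\<close> by algebra
    ultimately show "x = y" by metis
  qed
  have cT: "card T = card S" using card_image[OF injT] T_def by simp
  have Tc: "T \<subseteq> carrier R" using Sc e T_def by auto
  have disj: "S \<inter> T = {}"
  proof (rule ccontr)
    assume "S \<inter> T \<noteq> {}"
    then obtain a b where a: "a \<in> carrier R" and b: "b \<in> carrier R" and eq: "a \<otimes> a = e \<ominus> b \<otimes> b"
      unfolding S_def T_def by blast
    have "a \<otimes> a \<oplus> b \<otimes> b = (e \<ominus> b \<otimes> b) \<oplus> b \<otimes> b" using eq by (rule arg_cong)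
    also have "\<dots> = e" using b e by algebra
    finally have "a \<otimes> a \<oplus> b \<otimes> b = e" .
    thus False using nex a b by blast
  qed
  have "card (S \<union> T) = card S + card T" using disj fS T_def by (simp add: card_Un_disjoint)
  moreover have "card (S \<union> T) \<le> q" using Sc Tc fin by (intro card_mono) auto
  ultimately have "2 * card S \<le> q" using cT by simp
  with qS have "q = 2 * card S" by simp
  with q_odd show False by simp
qed

definition V :: "nat \<Rightarrow> (nat \<Rightarrow> 'a) set" where "V n = {..<n} \<rightarrow>\<^sub>E carrier R"
definition dotp :: "nat \<Rightarrow> (nat \<Rightarrow> 'a) \<Rightarrow> (nat \<Rightarrow> 'a) \<Rightarrow> 'a" where
  "dotp n x y = (\<Oplus>i\<in>{..<n}. x i \<otimes> y i)"
definition lin :: "nat \<Rightarrow> (nat \<Rightarrow> 'a) \<Rightarrow> 'a \<Rightarrow> (nat \<Rightarrow> 'a) \<Rightarrow> (nat \<Rightarrow> 'a)" where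
  "lin n x c y = restrict (\<lambda>i. x i \<oplus> c \<otimes> y i) {..<n}"

lemma V_carrier: "x \<in> V n \<Longrightarrow> i < n \<Longrightarrow> x i \<in> carrier R"
  unfolding V_def by auto

lemma V_undef: "x \<in> V n \<Longrightarrow> \<not> i < n \<Longrightarrow> x i = undefined"
  unfolding V_def by auto

lemma V_eqI: "x \<in> V n \<Longrightarrow> y \<in> V n \<Longrightarrow> (\<And>i. i < n \<Longrightarrow> x i = y i) \<Longrightarrow> x = y"
  unfolding V_def by (rule PiE_ext) auto

lemma dotp_closed: "x \<in> V n \<Longrightarrow> y \<in> V n \<Longrightarrow> dotp n x y \<in> carrier R"
  unfolding dotp_def by (intro finsum_closed) (auto simp: V_carrier)

lemma dotp_comm: "x \<in> V n \<Longrightarrow> y \<in> V n \<Longrightarrow> dotp n x y = dotp n y x"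
  unfolding dotp_def by (intro finsum_cong') (auto simp: V_carrier m_comm)

lemma lin_V: "x \<in> V n \<Longrightarrow> y \<in> V n \<Longrightarrow> c \<in> carrier R \<Longrightarrow> lin n x c y \<in> V n"
  unfolding lin_def V_def by auto

lemma lin_apply: "i < n \<Longrightarrow> lin n x c y i = x i \<oplus> c \<otimes> y i"
  unfolding lin_def by auto

lemma dotp_lin: 
  assumes x: "x \<in> V n" and y: "y \<in> V n" and z: "z \<in> V n" and c: "c \<in> carrier R"
  shows "dotp n (lin n x c y) z = dotp n x z \<oplus> c \<otimes> dotp n y z"
proof -
  have "dotp n (lin n x c y) z = (\<Oplus>i\<in>{..<n}. x i \<otimes> z i \<oplus> c \<otimes> (y i \<otimes> z i))"
    unfolding dotp_def
  proof (intro finsum_cong')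
    fix i assume "i \<in> {..<n}"
    hence i: "i < n" by simp
    have "x i \<in> carrier R" "y i \<in> carrier R" "z i \<in> carrier R" using x y z i V_carrier by auto
    thus "lin n x c y i \<otimes> z i = x i \<otimes> z i \<oplus> c \<otimes> (y i \<otimes> z i)"
      using i c by (simp add: lin_apply) algebra
  qed (use x y z c V_carrier in auto)
  also have "\<dots> = dotp n x z \<oplus> (\<Oplus>i\<in>{..<n}. c \<otimes> (y i \<otimes> z i))"
    unfolding dotp_def by (rule finsum_addf) (use x y z c V_carrier in auto)
  also have "(\<Oplus>i\<in>{..<n}. c \<otimes> (y i \<otimes> z i)) = c \<otimes> dotp n y z"
    unfolding dotp_def by (rule finsum_rdistr[symmetric]) (use y z c V_carrier in auto)
  finally show ?thesis .
qed

lemma dotp_lin2: 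
  assumes x: "x \<in> V n" and y: "y \<in> V n" and z: "z \<in> V n" and c: "c \<in> carrier R"
  shows "dotp n z (lin n x c y) = dotp n z x \<oplus> c \<otimes> dotp n z y"
  using dotp_lin[OF assms] dotp_comm lin_V assms by metis

lemma card_V: "card (V n) = q ^ n"
  unfolding V_def by (simp add: card_PiE)

lemma finite_V: "finite (V n)"
  unfolding V_def using fin by (simp add: finite_PiE)

lemma upd_V: "y \<in> V n \<Longrightarrow> a \<in> carrier R \<Longrightarrow> y(n := a) \<in> V (Suc n)"
  unfolding V_def by (auto simp: PiE_def extensional_def Pi_def less_Suc_eq)

lemma dotp_upd:
  assumes y: "y \<in> V n" and z: "z \<in> V n" and a: "a \<in> carrier R" and b: "b \<in> carrier R"
  shows "dotp (Suc n) (y(n := a)) (z(n := b)) = dotp n y z \<oplus> a \<otimes> b"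
proof -
  have "dotp (Suc n) (y(n := a)) (z(n := b)) = a \<otimes> b \<oplus> (\<Oplus>i\<in>{..<n}. (y(n := a)) i \<otimes> (z(n := b)) i)"
    unfolding dotp_def lessThan_Suc
    by (subst finsum_insert) (use y z a b V_carrier in auto)
  also have "(\<Oplus>i\<in>{..<n}. (y(n := a)) i \<otimes> (z(n := b)) i) = dotp n y z"
    unfolding dotp_def by (intro finsum_cong') (use y z V_carrier in auto)
  also have "a \<otimes> b \<oplus> dotp n y z = dotp n y z \<oplus> a \<otimes> b"
    using a b dotp_closed[OF y z] by (intro a_comm) auto
  finally show ?thesis .
qed


lemma V_upd_undef: "y \<in> V n \<Longrightarrow> y(n := undefined) = y"
  using V_undef[of y n n] by (simp add: fun_upd_idem)

lemma V_restrict: "x \<in> V (Suc n) \<Longrightarrow> x(n := undefined) \<in> V n"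
  unfolding V_def by (auto simp: PiE_def extensional_def Pi_def less_Suc_eq)

lemma split_card:
  "card {x \<in> V (Suc n). P x} = (\<Sum>a\<in>carrier R. card {y \<in> V n. P (y(n := a))})"
proof -
  let ?S = "Sigma (carrier R) (\<lambda>a. {y \<in> V n. P (y(n := a))})"
  have "card ?S = (\<Sum>a\<in>carrier R. card {y \<in> V n. P (y(n := a))})"
    using fin finite_V by (intro card_SigmaI) auto
  moreover have bij: "bij_betw (\<lambda>(a, y). y(n := a)) ?S {x \<in> V (Suc n). P x}"
  proof (rule bij_betw_byWitness[where f'="\<lambda>x. (x n, x(n := undefined))"])
    show "\<forall>p\<in>?S. (\<lambda>x. (x n, x(n := undefined))) ((\<lambda>(a, y). y(n := a)) p) = p"
    proof
      fix p assume "p \<in> ?S"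
      then obtain a y where p: "p = (a, y)" and y: "y \<in> V n" by (cases p) simp
      show "(\<lambda>x. (x n, x(n := undefined))) ((\<lambda>(a, y). y(n := a)) p) = p"
        using p V_upd_undef[OF y] by simp
    qed
    show "\<forall>x\<in>{x \<in> V (Suc n). P x}. (\<lambda>(a, y). y(n := a)) ((\<lambda>x. (x n, x(n := undefined))) x) = x"
      by simp
    show "(\<lambda>(a, y). y(n := a)) ` ?S \<subseteq> {x \<in> V (Suc n). P x}"
    proof
      fix x assume "x \<in> (\<lambda>(a, y). y(n := a)) ` ?S"
      then obtain p where p: "p \<in> ?S" and xp: "x = (\<lambda>(a, y). y(n := a)) p" by (rule imageE)
      obtain a y where "p = (a, y)" by (cases p)
      hence "a \<in> carrier R" "y \<in> V n" "P (y(n := a))" "x = y(n := a)" using p xp by simp_all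
      thus "x \<in> {x \<in> V (Suc n). P x}" using upd_V by simp
    qed
    show "(\<lambda>x. (x n, x(n := undefined))) ` {x \<in> V (Suc n). P x} \<subseteq> ?S"
    proof
      fix p assume "p \<in> (\<lambda>x. (x n, x(n := undefined))) ` {x \<in> V (Suc n). P x}"
      then obtain x where x: "x \<in> V (Suc n)" "P x" and p: "p = (x n, x(n := undefined))" by (rule imageE) (simp, metis)
      have "x n \<in> carrier R" using V_carrier[OF x(1)] by simp
      moreover have "x(n := undefined) \<in> V n" using V_restrict[OF x(1)] .
      moreover have "P ((x(n := undefined))(n := x n))" using x(2) by simp
      ultimately show "p \<in> ?S" using p by simp
    qed
  qed
  ultimately show ?thesis using bij_betw_same_card[OF bij] by simp
qed

definition N2 :: "'a \<Rightarrow> nat" where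
  "N2 e = card {p \<in> carrier R \<times> carrier R. snd p \<otimes> snd p \<oplus> fst p \<otimes> fst p = e}"

lemma N2_scale:
  assumes al: "\<alpha> \<in> carrier R" and be: "\<beta> \<in> carrier R" and nu: "\<alpha> \<otimes> \<alpha> \<oplus> \<beta> \<otimes> \<beta> \<noteq> \<zero>"
    and e: "e \<in> carrier R"
  shows "N2 e \<le> N2 ((\<alpha> \<otimes> \<alpha> \<oplus> \<beta> \<otimes> \<beta>) \<otimes> e)"
proof -
  define \<nu> where "\<nu> = \<alpha> \<otimes> \<alpha> \<oplus> \<beta> \<otimes> \<beta>"
  have nuc: "\<nu> \<in> carrier R" using al be \<nu>_def by simp
  define M where "M = (\<lambda>p. (\<alpha> \<otimes> fst p \<ominus> \<beta> \<otimes> snd p, \<beta> \<otimes> fst p \<oplus> \<alpha> \<otimes> snd p))"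
  let ?A = "{p \<in> carrier R \<times> carrier R. snd p \<otimes> snd p \<oplus> fst p \<otimes> fst p = e}"
  let ?B = "{p \<in> carrier R \<times> carrier R. snd p \<otimes> snd p \<oplus> fst p \<otimes> fst p = \<nu> \<otimes> e}"
  have "card ?A \<le> card ?B"
  proof (rule card_inj_on_le)
    show "finite ?B" using fin by simp
    show "M ` ?A \<subseteq> ?B"
    proof
      fix p' assume "p' \<in> M ` ?A"
      then obtain p where p: "p \<in> ?A" and pp: "p' = M p" by (rule imageE)
      obtain a b where ab: "p = (a, b)" by (cases p)
      have a: "a \<in> carrier R" and b: "b \<in> carrier R" and h: "b \<otimes> b \<oplus> a \<otimes> a = e" using p ab by auto
      have "(\<beta> \<otimes> a \<oplus> \<alpha> \<otimes> b) \<otimes> (\<beta> \<otimes> a \<oplus> \<alpha> \<otimes> b) \<oplus> (\<alpha> \<otimes> a \<ominus> \<beta> \<otimes> b) \<otimes> (\<alpha> \<otimes> a \<ominus> \<beta> \<otimes> b)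
            = (\<alpha> \<otimes> \<alpha> \<oplus> \<beta> \<otimes> \<beta>) \<otimes> (b \<otimes> b \<oplus> a \<otimes> a)" using a b al be by algebra
      thus "p' \<in> ?B" using pp ab a b al be h \<nu>_def M_def by simp
    qed
    show "inj_on M ?A"
    proof (rule inj_onI)
      fix p p' assume p: "p \<in> ?A" and p': "p' \<in> ?A" and eq: "M p = M p'"
      obtain a b where ab: "p = (a, b)" by (cases p)
      obtain a' b' where ab': "p' = (a', b')" by (cases p')
      have a: "a \<in> carrier R" and b: "b \<in> carrier R" using p ab by auto
      have a': "a' \<in> carrier R" and b': "b' \<in> carrier R" using p' ab' by auto
      have e1: "\<alpha> \<otimes> a \<ominus> \<beta> \<otimes> b = \<alpha> \<otimes> a' \<ominus> \<beta> \<otimes> b'" and e2: "\<beta> \<otimes> a \<oplus> \<alpha> \<otimes> b = \<beta> \<otimes> a' \<oplus> \<alpha> \<otimes> b'"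
        using eq ab ab' M_def by simp_all
      have "\<nu> \<otimes> a = \<alpha> \<otimes> (\<alpha> \<otimes> a \<ominus> \<beta> \<otimes> b) \<oplus> \<beta> \<otimes> (\<beta> \<otimes> a \<oplus> \<alpha> \<otimes> b)"
        using a b al be \<nu>_def by algebra
      also have "\<dots> = \<alpha> \<otimes> (\<alpha> \<otimes> a' \<ominus> \<beta> \<otimes> b') \<oplus> \<beta> \<otimes> (\<beta> \<otimes> a' \<oplus> \<alpha> \<otimes> b')" using e1 e2 by simp
      also have "\<dots> = \<nu> \<otimes> a'" using a' b' al be \<nu>_def by algebra
      finally have "a = a'" using m_lcancel[of \<nu> a a'] nu nuc a a' \<nu>_def by simp
      have "\<nu> \<otimes> b = \<alpha> \<otimes> (\<beta> \<otimes> a \<oplus> \<alpha> \<otimes> b) \<ominus> \<beta> \<otimes> (\<alpha> \<otimes> a \<ominus> \<beta> \<otimes> b)"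
        using a b al be \<nu>_def by algebra
      also have "\<dots> = \<alpha> \<otimes> (\<beta> \<otimes> a' \<oplus> \<alpha> \<otimes> b') \<ominus> \<beta> \<otimes> (\<alpha> \<otimes> a' \<ominus> \<beta> \<otimes> b')" using e1 e2 by simp
      also have "\<dots> = \<nu> \<otimes> b'" using a' b' al be \<nu>_def by algebra
      finally have "b = b'" using m_lcancel[of \<nu> b b'] nu nuc b b' \<nu>_def by simp
      show "p = p'" using ab ab' \<open>a = a'\<close> \<open>b = b'\<close> by simp
    qed
  qed
  thus ?thesis unfolding N2_def \<nu>_def .
qed

lemma N2_const: assumes e: "e \<in> carrier R" "e \<noteq> \<zero>" shows "N2 e = N2 \<one>"
proof (rule antisym)
  have ie: "inv e \<in> carrier R" "inv e \<otimes> e = \<one>" using e field_Units by auto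
  obtain a b where ab: "a \<in> carrier R" "b \<in> carrier R" "a \<otimes> a \<oplus> b \<otimes> b = inv e"
    using sum_two_squares[OF ie(1)] by blast
  have "inv e \<noteq> \<zero>" using ie e by (metis l_null one_not_zero)
  hence "N2 e \<le> N2 (inv e \<otimes> e)" using N2_scale[OF ab(1,2) _ e(1)] ab(3) by simp
  thus "N2 e \<le> N2 \<one>" using e field_Units by simp
  obtain c d where cd: "c \<in> carrier R" "d \<in> carrier R" "c \<otimes> c \<oplus> d \<otimes> d = e"
    using sum_two_squares[of e] e by auto
  have "N2 \<one> \<le> N2 (e \<otimes> \<one>)" using N2_scale[OF cd(1,2) _ one_closed] cd(3) e by simp
  thus "N2 \<one> \<le> N2 e" using e by simp
qed

lemma N2_zero: "N2 \<zero> = 1"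
proof -
  have "{p \<in> carrier R \<times> carrier R. snd p \<otimes> snd p \<oplus> fst p \<otimes> fst p = \<zero>} = {(\<zero>, \<zero>)}"
  proof (intro equalityI subsetI)
    fix p assume p: "p \<in> {p \<in> carrier R \<times> carrier R. snd p \<otimes> snd p \<oplus> fst p \<otimes> fst p = \<zero>}"
    obtain a b where ab: "p = (a, b)" by (cases p)
    have a: "a \<in> carrier R" and b: "b \<in> carrier R" and h: "b \<otimes> b \<oplus> a \<otimes> a = \<zero>" using p ab by auto
    have a0: "a = \<zero>"
    proof (rule ccontr)
      assume a0: "a \<noteq> \<zero>"
      have ia: "inv a \<in> carrier R" "inv a \<otimes> a = \<one>" using a a0 field_Units by auto
      have "(b \<otimes> inv a) \<otimes> (b \<otimes> inv a) = (b \<otimes> b \<oplus> a \<otimes> a) \<otimes> (inv a \<otimes> inv a) \<ominus> (inv a \<otimes> a) \<otimes> (inv a \<otimes> a)"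
        using a b ia(1) by algebra
      also have "\<dots> = \<zero> \<ominus> \<one>" using h ia a b by simp
      also have "\<dots> = \<ominus> \<one>" by algebra
      finally show False using minus_one_nonsq[of "b \<otimes> inv a"] b ia by simp
    qed
    have "b \<otimes> b = \<zero>" using h a0 b by simp
    hence "b = \<zero>" using b integral by blast
    thus "p \<in> {(\<zero>, \<zero>)}" using ab a0 by simp
  qed simp
  thus ?thesis unfolding N2_def by simp
qed

lemma card_fibers:
  assumes "finite S" "finite T" "f ` S \<subseteq> T"
  shows "card S = (\<Sum>t\<in>T. card {x \<in> S. f x = t})"
  using sum.group[OF assms, of "\<lambda>_. 1::nat"] by simp

lemma N2_one: "N2 \<one> = q + 1"
proof -
  have "q * q = card (carrier R \<times> carrier R)" by (simp add: card_cartesian_product)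
  also have "\<dots> = (\<Sum>e\<in>carrier R. N2 e)" unfolding N2_def
    by (rule card_fibers) (use fin in auto)
  also have "\<dots> = N2 \<zero> + (\<Sum>e\<in>carrier R - {\<zero>}. N2 e)"
    using fin by (subst sum.remove[of _ \<zero>]) auto
  also have "(\<Sum>e\<in>carrier R - {\<zero>}. N2 e) = (\<Sum>e\<in>carrier R - {\<zero>}. N2 \<one>)"
    by (rule sum.cong) (auto intro: N2_const)
  also have "\<dots> = (q - 1) * N2 \<one>" using fin by (simp add: card_Diff_singleton)
  finally have h: "q * q = 1 + (q - 1) * N2 \<one>" using N2_zero by simp
  have "(q - 1) * (q + 1) = q * q - 1" using q_ge3 by (simp add: algebra_simps)
  hence e: "(q - 1) * N2 \<one> = (q - 1) * (q + 1)" using h by simp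
  have nz: "q - 1 \<noteq> 0" using q_ge3 by simp
  show ?thesis using mult_left_cancel[OF nz, of "N2 \<one>" "q + 1"] e by blast
qed

definition N :: "nat \<Rightarrow> 'a \<Rightarrow> nat" where
  "N n c = card {x \<in> V n. dotp n x x = c}"

lemma eq_shift: "x \<in> carrier R \<Longrightarrow> u \<in> carrier R \<Longrightarrow> c \<in> carrier R \<Longrightarrow> (x \<oplus> u = c) \<longleftrightarrow> (x = c \<ominus> u)"
proof
  assume x: "x \<in> carrier R" and u: "u \<in> carrier R" and c: "c \<in> carrier R"
  { assume h: "x \<oplus> u = c"
    have "x = (x \<oplus> u) \<ominus> u" using x u by algebra
    thus "x = c \<ominus> u" using h by simp }
  { assume h: "x = c \<ominus> u"
    have "(c \<ominus> u) \<oplus> u = c" using c u by algebra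
    thus "x \<oplus> u = c" using h by simp }
qed

lemma N_split2:
  assumes c: "c \<in> carrier R"
  shows "N (Suc (Suc n)) c = (\<Sum>a\<in>carrier R. \<Sum>b\<in>carrier R. N n (c \<ominus> (b \<otimes> b \<oplus> a \<otimes> a)))"
proof -
  have "N (Suc (Suc n)) c = (\<Sum>a\<in>carrier R. card {y \<in> V (Suc n). dotp (Suc (Suc n)) (y(Suc n := a)) (y(Suc n := a)) = c})"
    unfolding N_def by (rule split_card)
  also have "\<dots> = (\<Sum>a\<in>carrier R. \<Sum>b\<in>carrier R. N n (c \<ominus> (b \<otimes> b \<oplus> a \<otimes> a)))"
  proof (rule sum.cong[OF refl])
    fix a assume a: "a \<in> carrier R"
    have "{y \<in> V (Suc n). dotp (Suc (Suc n)) (y(Suc n := a)) (y(Suc n := a)) = c}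
        = {y \<in> V (Suc n). dotp (Suc n) y y \<oplus> a \<otimes> a = c}"
      using dotp_upd a by auto
    hence "card {y \<in> V (Suc n). dotp (Suc (Suc n)) (y(Suc n := a)) (y(Suc n := a)) = c}
        = (\<Sum>b\<in>carrier R. card {z \<in> V n. dotp (Suc n) (z(n := b)) (z(n := b)) \<oplus> a \<otimes> a = c})"
      using split_card[of n "\<lambda>y. dotp (Suc n) y y \<oplus> a \<otimes> a = c"] by simp
    also have "\<dots> = (\<Sum>b\<in>carrier R. N n (c \<ominus> (b \<otimes> b \<oplus> a \<otimes> a)))"
    proof (rule sum.cong[OF refl])
      fix b assume b: "b \<in> carrier R"
      have "{z \<in> V n. dotp (Suc n) (z(n := b)) (z(n := b)) \<oplus> a \<otimes> a = c}
          = {z \<in> V n. dotp n z z = c \<ominus> (b \<otimes> b \<oplus> a \<otimes> a)}"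
      proof (rule Collect_cong)
        fix z
        show "(z \<in> V n \<and> dotp (Suc n) (z(n := b)) (z(n := b)) \<oplus> a \<otimes> a = c) =
              (z \<in> V n \<and> dotp n z z = c \<ominus> (b \<otimes> b \<oplus> a \<otimes> a))"
        proof (cases "z \<in> V n")
          case True
          have zz: "dotp n z z \<in> carrier R" using dotp_closed[OF True True] .
          have "dotp (Suc n) (z(n := b)) (z(n := b)) \<oplus> a \<otimes> a = dotp n z z \<oplus> (b \<otimes> b \<oplus> a \<otimes> a)"
            using dotp_upd[OF True True b b] zz a b by (simp add: a_assoc)
          thus ?thesis using True eq_shift[OF zz _ c, of "b \<otimes> b \<oplus> a \<otimes> a"] a b by simp
        qed simp
      qed
      thus "card {z \<in> V n. dotp (Suc n) (z(n := b)) (z(n := b)) \<oplus> a \<otimes> a = c} = N n (c \<ominus> (b \<otimes> b \<oplus> a \<otimes> a))"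
        unfolding N_def by simp
    qed
    finally show "card {y \<in> V (Suc n). dotp (Suc (Suc n)) (y(Suc n := a)) (y(Suc n := a)) = c}
        = (\<Sum>b\<in>carrier R. N n (c \<ominus> (b \<otimes> b \<oplus> a \<otimes> a)))" .
  qed
  finally show ?thesis .
qed

lemma sum_pairs:
  fixes g :: "'a \<Rightarrow> real"
  shows "(\<Sum>a\<in>carrier R. \<Sum>b\<in>carrier R. g (b \<otimes> b \<oplus> a \<otimes> a)) = (\<Sum>e\<in>carrier R. real (N2 e) * g e)"
proof -
  let ?h = "\<lambda>p. snd p \<otimes> snd p \<oplus> fst p \<otimes> fst p"
  have "(\<Sum>a\<in>carrier R. \<Sum>b\<in>carrier R. g (b \<otimes> b \<oplus> a \<otimes> a)) = (\<Sum>p\<in>carrier R \<times> carrier R. g (?h p))"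
    by (simp add: sum.cartesian_product split_def)
  also have "\<dots> = (\<Sum>e\<in>carrier R. \<Sum>p\<in>{p \<in> carrier R \<times> carrier R. ?h p = e}. g (?h p))"
    by (rule sum.group[symmetric]) (use fin in auto)
  also have "\<dots> = (\<Sum>e\<in>carrier R. real (N2 e) * g e)"
  proof (rule sum.cong[OF refl])
    fix e assume "e \<in> carrier R"
    have "(\<Sum>p\<in>{p \<in> carrier R \<times> carrier R. ?h p = e}. g (?h p)) = (\<Sum>p\<in>{p \<in> carrier R \<times> carrier R. ?h p = e}. g e)"
      by (rule sum.cong) auto
    thus "(\<Sum>p\<in>{p \<in> carrier R \<times> carrier R. ?h p = e}. g (?h p)) = real (N2 e) * g e"
      unfolding N2_def by simp
  qed
  finally show ?thesis .
qed

lemma sum_N: "(\<Sum>e\<in>carrier R. N n e) = q ^ n"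
proof -
  have "card (V n) = (\<Sum>e\<in>carrier R. card {x \<in> V n. dotp n x x = e})"
    by (rule card_fibers) (use fin finite_V dotp_closed in auto)
  thus ?thesis unfolding N_def card_V by simp
qed

lemma sum_N_shift: assumes c: "c \<in> carrier R" shows "(\<Sum>e\<in>carrier R. N n (c \<ominus> e)) = q ^ n"
proof -
  have "(\<Sum>e\<in>carrier R. N n (c \<ominus> e)) = (\<Sum>e\<in>carrier R. N n e)"
  proof -
    have cc: "\<And>e. e \<in> carrier R \<Longrightarrow> c \<ominus> (c \<ominus> e) = e" using c by algebra
    show ?thesis
      by (rule sum.reindex_bij_witness[where i="\<lambda>e. c \<ominus> e" and j="\<lambda>e. c \<ominus> e"]) (use c cc in auto)
  qed
  thus ?thesis using sum_N by simp
qed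

lemma N_rec:
  assumes c: "c \<in> carrier R"
  shows "real (N (Suc (Suc n)) c) = (real q + 1) * real q ^ n - real q * real (N n c)"
proof -
  have "real (N (Suc (Suc n)) c) = (\<Sum>a\<in>carrier R. \<Sum>b\<in>carrier R. real (N n (c \<ominus> (b \<otimes> b \<oplus> a \<otimes> a))))"
    using N_split2[OF c] by simp
  also have "\<dots> = (\<Sum>e\<in>carrier R. real (N2 e) * real (N n (c \<ominus> e)))"
    by (rule sum_pairs)
  also have "\<dots> = real (N2 \<zero>) * real (N n (c \<ominus> \<zero>)) + (\<Sum>e\<in>carrier R - {\<zero>}. real (N2 e) * real (N n (c \<ominus> e)))"
    using fin by (subst sum.remove[of _ \<zero>]) auto
  also have "(\<Sum>e\<in>carrier R - {\<zero>}. real (N2 e) * real (N n (c \<ominus> e))) = (\<Sum>e\<in>carrier R - {\<zero>}. (real q + 1) * real (N n (c \<ominus> e)))"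
  proof (rule sum.cong[OF refl])
    fix e assume "e \<in> carrier R - {\<zero>}"
    hence "N2 e = q + 1" using N2_const[of e] N2_one by auto
    thus "real (N2 e) * real (N n (c \<ominus> e)) = (real q + 1) * real (N n (c \<ominus> e))" by simp
  qed
  also have "\<dots> = (real q + 1) * (\<Sum>e\<in>carrier R - {\<zero>}. real (N n (c \<ominus> e)))"
    by (simp add: sum_distrib_left)
  also have "(\<Sum>e\<in>carrier R - {\<zero>}. real (N n (c \<ominus> e))) = (\<Sum>e\<in>carrier R. real (N n (c \<ominus> e))) - real (N n (c \<ominus> \<zero>))"
    using fin by (subst sum.remove[of "carrier R" \<zero>]) auto
  also have "(\<Sum>e\<in>carrier R. real (N n (c \<ominus> e))) = real q ^ n"
    using sum_N_shift[OF c, of n] by (metis of_nat_sum of_nat_power)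
  also have "c \<ominus> \<zero> = c" using c by algebra
  finally show ?thesis using N2_zero by (simp add: algebra_simps)
qed

lemma V0: "V 0 = {\<lambda>_. undefined}"
  unfolding V_def by simp

lemma N0: "N 0 c = (if c = \<zero> then 1 else 0)"
  unfolding N_def V0 dotp_def by simp

lemma N_even:
  assumes c: "c \<in> carrier R"
  shows "real (N (2*j+2) c) = real q ^ (2*j+1) + (- real q) ^ j * (if c = \<zero> then 1 - real q else 1)"
proof (induction j)
  case 0
  have "real (N (Suc (Suc 0)) c) = (real q + 1) * real q ^ 0 - real q * real (N 0 c)" by (rule N_rec[OF c])
  thus ?case by (simp add: N0)
next
  case (Suc j)
  have "real (N (Suc (Suc (2*j+2))) c) = (real q + 1) * real q ^ (2*j+2) - real q * real (N (2*j+2) c)"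
    by (rule N_rec[OF c])
  also have "\<dots> = real q ^ (2*Suc j+1) + (- real q) ^ Suc j * (if c = \<zero> then 1 - real q else 1)"
    using Suc.IH by (simp add: algebra_simps)
  finally show ?case by simp
qed

lemma N1: "N 1 c = card {a \<in> carrier R. a \<otimes> a = c}"
proof -
  have "N 1 c = (\<Sum>a\<in>carrier R. card {y \<in> V 0. dotp 1 (y(0 := a)) (y(0 := a)) = c})"
    unfolding N_def using split_card[of 0 "\<lambda>x. dotp 1 x x = c"] by simp
  also have "\<dots> = (\<Sum>a\<in>carrier R. if a \<otimes> a = c then 1 else 0)"
  proof (rule sum.cong[OF refl])
    fix a assume a: "a \<in> carrier R"
    have y0: "(\<lambda>_. undefined) \<in> V 0" unfolding V0 by simp
    have "dotp 1 ((\<lambda>_. undefined)(0 := a)) ((\<lambda>_. undefined)(0 := a)) = dotp 0 (\<lambda>_. undefined) (\<lambda>_. undefined) \<oplus> a \<otimes> a"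
      using dotp_upd[OF y0 y0 a a] by simp
    also have "\<dots> = a \<otimes> a" using a unfolding dotp_def by simp
    finally have h: "dotp 1 ((\<lambda>_. undefined)(0 := a)) ((\<lambda>_. undefined)(0 := a)) = a \<otimes> a" .
    have "{y \<in> V 0. dotp 1 (y(0 := a)) (y(0 := a)) = c} = (if a \<otimes> a = c then {\<lambda>_. undefined} else {})"
      unfolding V0 using h by auto
    thus "card {y \<in> V 0. dotp 1 (y(0 := a)) (y(0 := a)) = c} = (if a \<otimes> a = c then 1 else 0)"
      by simp
  qed
  also have "\<dots> = card {a \<in> carrier R. a \<otimes> a = c}"
    using fin by (simp add: sum.If_cases) (metis Collect_conj_eq Collect_mem_eq)
  finally show ?thesis .
qed

lemma N1_zero: "N 1 \<zero> = 1"
proof -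
  have "{a \<in> carrier R. a \<otimes> a = \<zero>} = {\<zero>}" using integral by auto
  thus ?thesis using N1 by simp
qed

lemma neg_ne: "s \<in> carrier R \<Longrightarrow> s \<noteq> \<zero> \<Longrightarrow> \<ominus> s \<noteq> s"
proof
  assume s: "s \<in> carrier R" "s \<noteq> \<zero>" and h: "\<ominus> s = s"
  have "(\<one> \<oplus> \<one>) \<otimes> s = s \<oplus> s" using s by algebra
  also have "\<dots> = \<zero>" using h s by (metis r_neg)
  finally show False using integral[of "\<one> \<oplus> \<one>" s] s two_ne_zero by simp
qed

lemma N1_sq: assumes s: "s \<in> carrier R" "s \<noteq> \<zero>" shows "N 1 (s \<otimes> s) = 2"
proof -
  have "{a \<in> carrier R. a \<otimes> a = s \<otimes> s} = {s, \<ominus> s}"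
  proof (intro equalityI subsetI)
    fix a assume "a \<in> {a \<in> carrier R. a \<otimes> a = s \<otimes> s}"
    thus "a \<in> {s, \<ominus> s}" using sq_eq[of a s] s by auto
  next
    fix a assume "a \<in> {s, \<ominus> s}"
    moreover have "\<ominus> s \<otimes> \<ominus> s = s \<otimes> s" using s by algebra
    ultimately show "a \<in> {a \<in> carrier R. a \<otimes> a = s \<otimes> s}" using s by auto
  qed
  thus ?thesis using N1 neg_ne[OF s] by simp
qed

lemma N_odd0: "real (N (2*j+1) \<zero>) = real q ^ (2*j)"
proof (induction j)
  case 0
  then show ?case using N1_zero by simp
next
  case (Suc j)
  have "real (N (Suc (Suc (2*j+1))) \<zero>) = (real q + 1) * real q ^ (2*j+1) - real q * real (N (2*j+1) \<zero>)"
    by (rule N_rec) simp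
  also have "\<dots> = real q ^ (2 * Suc j)" using Suc.IH by (simp add: algebra_simps)
  finally show ?case by simp
qed

lemma N_oddsq: assumes s: "s \<in> carrier R" "s \<noteq> \<zero>"
  shows "real (N (2*j+1) (s \<otimes> s)) = real q ^ (2*j) + (- real q) ^ j"
proof (induction j)
  case 0
  then show ?case using N1_sq[OF s] by simp
next
  case (Suc j)
  have "real (N (Suc (Suc (2*j+1))) (s \<otimes> s)) = (real q + 1) * real q ^ (2*j+1) - real q * real (N (2*j+1) (s \<otimes> s))"
    by (rule N_rec) (use s in simp)
  also have "\<dots> = real q ^ (2 * Suc j) + (- real q) ^ Suc j" using Suc.IH by (simp add: algebra_simps)
  finally show ?case by simp
qed

definition F :: "nat \<Rightarrow> (nat \<Rightarrow> 'a) \<Rightarrow> nat" where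
  "F n w = card {x \<in> V n. dotp n x x = \<zero> \<and> dotp n x w = \<zero>}"

definition refl :: "nat \<Rightarrow> (nat \<Rightarrow> 'a) \<Rightarrow> (nat \<Rightarrow> 'a) \<Rightarrow> (nat \<Rightarrow> 'a)" where
  "refl n u x = lin n x (\<ominus> (dotp n x u \<otimes> ((\<one> \<oplus> \<one>) \<otimes> inv (dotp n u u)))) u"

lemma two_closed: "\<one> \<oplus> \<one> \<in> carrier R" by simp

lemma kappa:
  assumes "Qu \<in> carrier R" "Qu \<noteq> \<zero>"
  shows "((\<one> \<oplus> \<one>) \<otimes> inv Qu) \<in> carrier R" "((\<one> \<oplus> \<one>) \<otimes> inv Qu) \<otimes> Qu = \<one> \<oplus> \<one>"
proof -
  have i: "inv Qu \<in> carrier R" "inv Qu \<otimes> Qu = \<one>" using assms field_Units by auto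
  show "((\<one> \<oplus> \<one>) \<otimes> inv Qu) \<in> carrier R" using i by simp
  have "((\<one> \<oplus> \<one>) \<otimes> inv Qu) \<otimes> Qu = (\<one> \<oplus> \<one>) \<otimes> (inv Qu \<otimes> Qu)"
    using i assms by (simp add: m_assoc)
  thus "((\<one> \<oplus> \<one>) \<otimes> inv Qu) \<otimes> Qu = \<one> \<oplus> \<one>" using i by simp
qed

lemma refl_V: "u \<in> V n \<Longrightarrow> x \<in> V n \<Longrightarrow> dotp n u u \<noteq> \<zero> \<Longrightarrow> refl n u x \<in> V n"
  unfolding refl_def using kappa[of "dotp n u u"] dotp_closed by (intro lin_V) auto

lemma refl_dotp:
  assumes u: "u \<in> V n" and x: "x \<in> V n" and y: "y \<in> V n" and Qu: "dotp n u u \<noteq> \<zero>"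
  shows "dotp n (refl n u x) (refl n u y) = dotp n x y"
proof -
  define k where "k = (\<one> \<oplus> \<one>) \<otimes> inv (dotp n u u)"
  have k: "k \<in> carrier R" "k \<otimes> dotp n u u = \<one> \<oplus> \<one>" using kappa[OF dotp_closed[OF u u] Qu] k_def by auto
  define bx where "bx = dotp n x u"
  define by' where "by' = dotp n y u"
  have cl: "bx \<in> carrier R" "by' \<in> carrier R" "dotp n u u \<in> carrier R" "dotp n x y \<in> carrier R"
    using dotp_closed u x y bx_def by'_def by auto
  have cx: "\<ominus> (bx \<otimes> k) \<in> carrier R" and cy: "\<ominus> (by' \<otimes> k) \<in> carrier R" using cl k by auto
  have rx: "refl n u x = lin n x (\<ominus> (bx \<otimes> k)) u" unfolding refl_def bx_def k_def ..
  have ry: "refl n u y = lin n y (\<ominus> (by' \<otimes> k)) u" unfolding refl_def by'_def k_def ..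
  have lyV: "lin n y (\<ominus> (by' \<otimes> k)) u \<in> V n" using lin_V[OF y u cy] .
  have "dotp n (refl n u x) (refl n u y) = dotp n x (lin n y (\<ominus> (by' \<otimes> k)) u) \<oplus> (\<ominus> (bx \<otimes> k)) \<otimes> dotp n u (lin n y (\<ominus> (by' \<otimes> k)) u)"
    unfolding rx ry by (rule dotp_lin[OF x u lyV cx])
  also have "dotp n x (lin n y (\<ominus> (by' \<otimes> k)) u) = dotp n x y \<oplus> (\<ominus> (by' \<otimes> k)) \<otimes> bx"
    using dotp_lin2[OF y u x cy] bx_def by simp
  also have "dotp n u (lin n y (\<ominus> (by' \<otimes> k)) u) = by' \<oplus> (\<ominus> (by' \<otimes> k)) \<otimes> dotp n u u"
    using dotp_lin2[OF y u u cy] by'_def dotp_comm[OF u y] by simp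
  also have "dotp n x y \<oplus> (\<ominus> (by' \<otimes> k)) \<otimes> bx \<oplus> (\<ominus> (bx \<otimes> k)) \<otimes> (by' \<oplus> (\<ominus> (by' \<otimes> k)) \<otimes> dotp n u u)
      = dotp n x y \<oplus> (bx \<otimes> by' \<otimes> k) \<otimes> (k \<otimes> dotp n u u \<ominus> (\<one> \<oplus> \<one>))"
    using cl k by algebra
  also have "k \<otimes> dotp n u u \<ominus> (\<one> \<oplus> \<one>) = \<zero>" using k by simp
  finally show ?thesis using cl k by simp
qed

lemma refl_invol:
  assumes u: "u \<in> V n" and x: "x \<in> V n" and Qu: "dotp n u u \<noteq> \<zero>"
  shows "refl n u (refl n u x) = x"
proof -
  define k where "k = (\<one> \<oplus> \<one>) \<otimes> inv (dotp n u u)"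
  have k: "k \<in> carrier R" "k \<otimes> dotp n u u = \<one> \<oplus> \<one>" using kappa[OF dotp_closed[OF u u] Qu] k_def by auto
  define bx where "bx = dotp n x u"
  have cl: "bx \<in> carrier R" "dotp n u u \<in> carrier R" using dotp_closed u x bx_def by auto
  have cx: "\<ominus> (bx \<otimes> k) \<in> carrier R" using cl k by auto
  have rx: "refl n u x = lin n x (\<ominus> (bx \<otimes> k)) u" unfolding refl_def bx_def k_def ..
  have rV: "refl n u x \<in> V n" using refl_V[OF u x Qu] .
  have "dotp n (refl n u x) u = bx \<oplus> (\<ominus> (bx \<otimes> k)) \<otimes> dotp n u u"
    unfolding rx using dotp_lin[OF x u u cx] bx_def by simp
  also have "\<dots> = bx \<ominus> bx \<otimes> (k \<otimes> dotp n u u)" using cl k by algebra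
  also have "\<dots> = bx \<ominus> bx \<otimes> (\<one> \<oplus> \<one>)" using k(2) by (rule arg_cong)
  also have "\<dots> = \<ominus> bx" using cl by algebra
  finally have b2: "dotp n (refl n u x) u = \<ominus> bx" .
  have rr: "refl n u (refl n u x) = lin n (refl n u x) (\<ominus> (\<ominus> bx \<otimes> k)) u"
    unfolding refl_def[of n u "refl n u x"] b2 k_def ..
  show ?thesis
  proof (rule V_eqI)
    show "refl n u (refl n u x) \<in> V n" using refl_V[OF u rV Qu] .
    show "x \<in> V n" by fact
    fix i assume i: "i < n"
    have ui: "u i \<in> carrier R" and xi: "x i \<in> carrier R" using u x i V_carrier by auto
    have "refl n u (refl n u x) i = refl n u x i \<oplus> (\<ominus> (\<ominus> bx \<otimes> k)) \<otimes> u i"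
      unfolding rr using i by (rule lin_apply)
    moreover have "refl n u x i = x i \<oplus> (\<ominus> (bx \<otimes> k)) \<otimes> u i"
      unfolding rx using i by (rule lin_apply)
    ultimately have "refl n u (refl n u x) i = (x i \<oplus> (\<ominus> (bx \<otimes> k)) \<otimes> u i) \<oplus> (\<ominus> (\<ominus> bx \<otimes> k)) \<otimes> u i"
      by simp
    also have "\<dots> = x i" using ui xi cl k by algebra
    finally show "refl n u (refl n u x) i = x i" .
  qed
qed

lemma F_refl:
  assumes u: "u \<in> V n" and w: "w \<in> V n" and Qu: "dotp n u u \<noteq> \<zero>"
  shows "F n (refl n u w) = F n w"
proof -
  let ?A = "{x \<in> V n. dotp n x x = \<zero> \<and> dotp n x w = \<zero>}"
  let ?B = "{x \<in> V n. dotp n x x = \<zero> \<and> dotp n x (refl n u w) = \<zero>}"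
  have bij: "bij_betw (refl n u) ?A ?B"
  proof (rule bij_betw_byWitness[where f'="refl n u"])
    show "\<forall>x\<in>?A. refl n u (refl n u x) = x" using refl_invol[OF u _ Qu] by simp
    show "\<forall>x\<in>?B. refl n u (refl n u x) = x" using refl_invol[OF u _ Qu] by simp
    show "refl n u ` ?A \<subseteq> ?B"
    proof
      fix y assume "y \<in> refl n u ` ?A"
      then obtain x where x: "x \<in> ?A" and y: "y = refl n u x" by (rule imageE)
      have xV: "x \<in> V n" using x by simp
      show "y \<in> ?B" using x y refl_V[OF u xV Qu] refl_dotp[OF u xV xV Qu] refl_dotp[OF u xV w Qu] by simp
    qed
    show "refl n u ` ?B \<subseteq> ?A"
    proof
      fix y assume "y \<in> refl n u ` ?B"
      then obtain x where x: "x \<in> ?B" and y: "y = refl n u x" by (rule imageE)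
      have xV: "x \<in> V n" using x by simp
      have rw: "refl n u w \<in> V n" using refl_V[OF u w Qu] .
      have "dotp n y w = dotp n (refl n u x) (refl n u (refl n u w))" using y refl_invol[OF u w Qu] by simp
      also have "\<dots> = dotp n x (refl n u w)" using refl_dotp[OF u xV rw Qu] .
      finally show "y \<in> ?A" using x y refl_V[OF u xV Qu] refl_dotp[OF u xV xV Qu] by simp
    qed
  qed
  show ?thesis unfolding F_def using bij_betw_same_card[OF bij] by simp
qed

definition zv :: "nat \<Rightarrow> (nat \<Rightarrow> 'a)" where "zv n = restrict (\<lambda>_. \<zero>) {..<n}"
definition ev :: "nat \<Rightarrow> nat \<Rightarrow> (nat \<Rightarrow> 'a)" where "ev n i = restrict (\<lambda>j. if j = i then \<one> else \<zero>) {..<n}"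

lemma zv_V: "zv n \<in> V n" unfolding zv_def V_def by simp
lemma ev_V: "ev n i \<in> V n" unfolding ev_def V_def by simp

lemma dotp_zv: "x \<in> V n \<Longrightarrow> dotp n x (zv n) = \<zero>"
proof -
  assume x: "x \<in> V n"
  have "dotp n x (zv n) = (\<Oplus>i\<in>{..<n}. \<zero>)"
    unfolding dotp_def zv_def by (intro finsum_cong') (use x V_carrier in auto)
  thus ?thesis by simp
qed

lemma dotp_ev: assumes y: "y \<in> V n" and i: "i < n" shows "dotp n (ev n i) y = y i"
proof -
  have "dotp n (ev n i) y = (\<Oplus>j\<in>{..<n}. if i = j then y j else \<zero>)"
    unfolding dotp_def ev_def by (intro finsum_cong') (use y V_carrier in auto)
  also have "\<dots> = y i" by (rule finsum_singleton) (use i y V_carrier in auto)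
  finally show ?thesis .
qed

lemma Q_lin:
  assumes x: "x \<in> V n" and y: "y \<in> V n" and c: "c \<in> carrier R"
  shows "dotp n (lin n x c y) (lin n x c y) = dotp n x x \<oplus> (\<one> \<oplus> \<one>) \<otimes> c \<otimes> dotp n x y \<oplus> c \<otimes> c \<otimes> dotp n y y"
proof -
  have L: "lin n x c y \<in> V n" using lin_V[OF x y c] .
  have "dotp n (lin n x c y) (lin n x c y) = dotp n x (lin n x c y) \<oplus> c \<otimes> dotp n y (lin n x c y)"
    by (rule dotp_lin[OF x y L c])
  also have "dotp n x (lin n x c y) = dotp n x x \<oplus> c \<otimes> dotp n x y" by (rule dotp_lin2[OF x y x c])
  also have "dotp n y (lin n x c y) = dotp n y x \<oplus> c \<otimes> dotp n y y" by (rule dotp_lin2[OF x y y c])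
  also have "dotp n y x = dotp n x y" using dotp_comm[OF x y] by simp
  finally show ?thesis using dotp_closed[OF x x] dotp_closed[OF x y] dotp_closed[OF y y] c by algebra
qed

lemma move:
  assumes v: "v \<in> V n" and w: "w \<in> V n" and Q: "dotp n v v = dotp n w w"
    and D: "dotp n v v \<ominus> dotp n v w \<noteq> \<zero>"
  shows "F n v = F n w"
proof -
  define u where "u = lin n v (\<ominus> \<one>) w"
  have m1: "\<ominus> \<one> \<in> carrier R" by simp
  have uV: "u \<in> V n" unfolding u_def using lin_V[OF v w m1] .
  define Dv where "Dv = dotp n v v \<ominus> dotp n v w"
  have cl: "dotp n v v \<in> carrier R" "dotp n v w \<in> carrier R" "dotp n w w \<in> carrier R"
    using dotp_closed v w by auto
  have Dc: "Dv \<in> carrier R" using cl Dv_def by simp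
  have Bvu: "dotp n v u = Dv"
    unfolding u_def Dv_def using dotp_lin2[OF v w v m1] cl by (simp add: a_minus_def l_minus)
  have "dotp n u u = dotp n v v \<oplus> (\<one> \<oplus> \<one>) \<otimes> \<ominus> \<one> \<otimes> dotp n v w \<oplus> \<ominus> \<one> \<otimes> \<ominus> \<one> \<otimes> dotp n w w"
    unfolding u_def by (rule Q_lin[OF v w m1])
  also have "\<dots> = (\<one> \<oplus> \<one>) \<otimes> Dv" using cl Q Dv_def by simp algebra
  finally have Qu: "dotp n u u = (\<one> \<oplus> \<one>) \<otimes> Dv" .
  have Qu0: "dotp n u u \<noteq> \<zero>" using Qu integral[of "\<one> \<oplus> \<one>" Dv] two_ne_zero D Dv_def Dc by auto
  define k where "k = (\<one> \<oplus> \<one>) \<otimes> inv (dotp n u u)"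
  have k: "k \<in> carrier R" "k \<otimes> dotp n u u = \<one> \<oplus> \<one>" using kappa[OF dotp_closed[OF uV uV] Qu0] k_def by auto
  have "(\<one> \<oplus> \<one>) \<otimes> (Dv \<otimes> k) = k \<otimes> dotp n u u" using Qu k Dc by simp algebra
  also have "\<dots> = (\<one> \<oplus> \<one>) \<otimes> \<one>" using k by simp
  finally have Dk: "Dv \<otimes> k = \<one>" using m_lcancel[of "\<one> \<oplus> \<one>" "Dv \<otimes> k" \<one>] two_ne_zero k Dc by simp
  have rv: "refl n u v = w"
  proof (rule V_eqI)
    show "refl n u v \<in> V n" using refl_V[OF uV v Qu0] .
    show "w \<in> V n" by fact
    fix i assume i: "i < n"
    have vi: "v i \<in> carrier R" and wi: "w i \<in> carrier R" using v w i V_carrier by auto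
    have "refl n u v i = v i \<oplus> (\<ominus> (dotp n v u \<otimes> k)) \<otimes> u i"
      unfolding refl_def k_def using i by (rule lin_apply)
    also have "u i = v i \<oplus> \<ominus> \<one> \<otimes> w i" unfolding u_def using i by (rule lin_apply)
    also have "dotp n v u \<otimes> k = \<one>" using Bvu Dk by simp
    also have "v i \<oplus> \<ominus> \<one> \<otimes> (v i \<oplus> \<ominus> \<one> \<otimes> w i) = w i" using vi wi by algebra
    finally show "refl n u v i = w i" .
  qed
  show ?thesis using F_refl[OF uV v Qu0] rv by simp
qed

lemma F_neg: assumes w: "w \<in> V n" shows "F n (lin n (zv n) (\<ominus> \<one>) w) = F n w"
proof -
  have m1: "\<ominus> \<one> \<in> carrier R" by simp
  have "\<And>x. x \<in> V n \<Longrightarrow> dotp n x (lin n (zv n) (\<ominus> \<one>) w) = \<ominus> dotp n x w"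
  proof -
    fix x assume x: "x \<in> V n"
    have "dotp n x (lin n (zv n) (\<ominus> \<one>) w) = dotp n x (zv n) \<oplus> \<ominus> \<one> \<otimes> dotp n x w"
      by (rule dotp_lin2[OF zv_V w x m1])
    thus "dotp n x (lin n (zv n) (\<ominus> \<one>) w) = \<ominus> dotp n x w" using dotp_zv[OF x] dotp_closed[OF x w] by (simp add: l_minus)
  qed
  hence "{x \<in> V n. dotp n x x = \<zero> \<and> dotp n x (lin n (zv n) (\<ominus> \<one>) w) = \<zero>} = {x \<in> V n. dotp n x x = \<zero> \<and> dotp n x w = \<zero>}"
    using dotp_closed[OF _ w] by auto
  thus ?thesis unfolding F_def by simp
qed

lemma Q_neg: assumes w: "w \<in> V n" shows "dotp n (lin n (zv n) (\<ominus> \<one>) w) (lin n (zv n) (\<ominus> \<one>) w) = dotp n w w"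
proof -
  have m1: "\<ominus> \<one> \<in> carrier R" by simp
  have "dotp n (lin n (zv n) (\<ominus> \<one>) w) (lin n (zv n) (\<ominus> \<one>) w) = dotp n (zv n) (zv n) \<oplus> (\<one> \<oplus> \<one>) \<otimes> \<ominus> \<one> \<otimes> dotp n (zv n) w \<oplus> \<ominus> \<one> \<otimes> \<ominus> \<one> \<otimes> dotp n w w"
    by (rule Q_lin[OF zv_V w m1])
  also have "dotp n (zv n) (zv n) = \<zero>" using dotp_zv[OF zv_V] .
  also have "dotp n (zv n) w = \<zero>" using dotp_zv[OF w] dotp_comm[OF w zv_V] by simp
  finally show ?thesis using dotp_closed[OF w w] by simp algebra
qed

lemma F_noniso:
  assumes v: "v \<in> V n" and w: "w \<in> V n" and Q: "dotp n v v = dotp n w w" and a0: "dotp n v v \<noteq> \<zero>"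
  shows "F n v = F n w"
proof (cases "dotp n v v \<ominus> dotp n v w = \<zero>")
  case False
  then show ?thesis using move[OF v w Q] by simp
next
  case True
  define w1 where "w1 = lin n (zv n) (\<ominus> \<one>) w"
  have m1: "\<ominus> \<one> \<in> carrier R" by simp
  have w1V: "w1 \<in> V n" unfolding w1_def using lin_V[OF zv_V w m1] .
  have cl: "dotp n v v \<in> carrier R" "dotp n v w \<in> carrier R" using dotp_closed v w by auto
  have Bw: "dotp n v w = dotp n v v" using True cl by (metis r_right_minus_eq)
  have "dotp n v w1 = dotp n v (zv n) \<oplus> \<ominus> \<one> \<otimes> dotp n v w"
    unfolding w1_def by (rule dotp_lin2[OF zv_V w v m1])
  hence Bw1: "dotp n v w1 = \<ominus> dotp n v v" using dotp_zv[OF v] Bw cl by (simp add: l_minus)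
  have Q1: "dotp n v v = dotp n w1 w1" using Q_neg[OF w] Q w1_def by simp
  have "dotp n v v \<ominus> dotp n v w1 = (\<one> \<oplus> \<one>) \<otimes> dotp n v v" using Bw1 cl by simp algebra
  hence "dotp n v v \<ominus> dotp n v w1 \<noteq> \<zero>" using integral[of "\<one> \<oplus> \<one>" "dotp n v v"] two_ne_zero a0 cl by auto
  hence "F n v = F n w1" using move[OF v w1V Q1] by simp
  also have "\<dots> = F n w" unfolding w1_def by (rule F_neg[OF w])
  finally show ?thesis .
qed

lemma sum0_neg: "a \<in> carrier R \<Longrightarrow> b \<in> carrier R \<Longrightarrow> a \<oplus> b = \<zero> \<Longrightarrow> b = \<ominus> a"
  using minus_equality[of b a] by (simp add: a_comm)

lemma iso_step:
  assumes a: "a \<in> V n" and b: "b \<in> V n" and Qa: "dotp n a a = \<zero>" and Qb: "dotp n b b = \<zero>"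
    and B: "dotp n a b \<noteq> \<zero>"
  shows "F n a = F n b"
proof (rule move[OF a b])
  show "dotp n a a = dotp n b b" using Qa Qb by simp
  show "dotp n a a \<ominus> dotp n a b \<noteq> \<zero>" using Qa B dotp_closed[OF a b]
    by (metis a_minus_def add.inv_closed add.l_inv_ex l_zero minus_minus minus_zero)
qed

lemma F_iso:
  assumes v: "v \<in> V n" and w: "w \<in> V n" and Qv: "dotp n v v = \<zero>" and Qw: "dotp n w w = \<zero>"
    and i: "i < n" and vi: "v i \<noteq> \<zero>" and wl: "w (n - 1) = \<one>"
  shows "F n v = F n w"
proof (cases "dotp n v w = \<zero>")
  case False
  then show ?thesis using iso_step[OF v w Qv Qw] by simp
next
  case True
  have n1: "n - 1 < n" using i by simp
  have vic: "v i \<in> carrier R" and vlc: "v (n - 1) \<in> carrier R" and wic: "w i \<in> carrier R"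
    using v w i n1 V_carrier by auto
  define bad where "bad = {\<ominus> (w i), \<ominus> (v i) \<otimes> inv (v (n - 1))}"
  have "card bad \<le> 2" unfolding bad_def by (simp add: card_insert_le_m1)
  have "\<not> carrier R \<subseteq> bad"
  proof
    assume "carrier R \<subseteq> bad"
    hence "q \<le> card bad" unfolding bad_def by (intro card_mono) auto
    thus False using \<open>card bad \<le> 2\<close> q_ge3 by simp
  qed
  then obtain l where l: "l \<in> carrier R" "l \<notin> bad" by blast
  have l1: "w i \<oplus> l \<noteq> \<zero>"
  proof
    assume "w i \<oplus> l = \<zero>"
    hence "l = \<ominus> (w i)" using sum0_neg wic l by blast
    thus False using l bad_def by simp
  qed
  have l2: "v i \<oplus> l \<otimes> v (n - 1) \<noteq> \<zero>"
  proof
    assume h: "v i \<oplus> l \<otimes> v (n - 1) = \<zero>"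
    show False
    proof (cases "v (n - 1) = \<zero>")
      case True
      then show False using h vi vic l by simp
    next
      case False
      have iv: "inv (v (n - 1)) \<in> carrier R" "v (n - 1) \<otimes> inv (v (n - 1)) = \<one>" using False vlc field_Units by auto
      have "l \<otimes> v (n - 1) = \<ominus> (v i)" using sum0_neg[OF vic _ h] l vlc by simp
      hence "l \<otimes> v (n - 1) \<otimes> inv (v (n - 1)) = \<ominus> (v i) \<otimes> inv (v (n - 1))" by simp
      hence "l = \<ominus> (v i) \<otimes> inv (v (n - 1))" using iv l vlc by (simp add: m_assoc)
      thus False using l bad_def by simp
    qed
  qed
  define z where "z = lin n (ev n i) l (ev n (n - 1))"
  have zV: "z \<in> V n" unfolding z_def using lin_V[OF ev_V ev_V l(1)] .
  have Bz: "dotp n z y = y i \<oplus> l \<otimes> y (n - 1)" if y: "y \<in> V n" for y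
    unfolding z_def using dotp_lin[OF ev_V ev_V y l(1)] dotp_ev[OF y i] dotp_ev[OF y n1] by simp
  have Bzv: "dotp n z v \<noteq> \<zero>" using Bz[OF v] l2 by simp
  have Bzw: "dotp n z w \<noteq> \<zero>" using Bz[OF w] l1 wl l wic by simp
  have clz: "dotp n z z \<in> carrier R" "dotp n z v \<in> carrier R" "dotp n z w \<in> carrier R"
    using dotp_closed zV v w by auto
  define t where "t = (\<one> \<oplus> \<one>) \<otimes> dotp n z v"
  have tc: "t \<in> carrier R" using clz t_def by simp
  have t0: "t \<noteq> \<zero>" using integral[of "\<one> \<oplus> \<one>" "dotp n z v"] two_ne_zero Bzv clz t_def by auto
  have it: "inv t \<in> carrier R" "inv t \<otimes> t = \<one>" using tc t0 field_Units by auto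
  define s where "s = \<ominus> (dotp n z z \<otimes> inv t)"
  have sc: "s \<in> carrier R" using s_def clz it by simp
  define u where "u = lin n z s v"
  have uV: "u \<in> V n" unfolding u_def using lin_V[OF zV v sc] .
  have "dotp n u u = dotp n z z \<oplus> (\<one> \<oplus> \<one>) \<otimes> s \<otimes> dotp n z v \<oplus> s \<otimes> s \<otimes> dotp n v v"
    unfolding u_def by (rule Q_lin[OF zV v sc])
  also have "\<dots> = dotp n z z \<ominus> dotp n z z \<otimes> (inv t \<otimes> t)"
    using clz it(1)[unfolded t_def] unfolding s_def t_def Qv by algebra
  also have "\<dots> = \<zero>" using it clz by simp
  finally have Qu: "dotp n u u = \<zero>" .
  have Buv: "dotp n u v = dotp n z v"
    unfolding u_def using dotp_lin[OF zV v v sc] Qv clz sc by simp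
  have Buw: "dotp n u w = dotp n z w"
    unfolding u_def using dotp_lin[OF zV v w sc] True clz sc by simp
  have "F n v = F n u"
    using iso_step[OF v uV Qv Qu] dotp_comm[OF v uV] Buv Bzv by simp
  also have "\<dots> = F n w"
    using iso_step[OF uV w Qu Qw] Buw Bzw by simp
  finally show ?thesis .
qed

lemma sumsq_zero:
  assumes a: "a \<in> carrier R" and b: "b \<in> carrier R" and h: "a \<otimes> a \<oplus> b \<otimes> b = \<zero>"
  shows "a = \<zero>"
proof (rule ccontr)
  assume a0: "a \<noteq> \<zero>"
  have ia: "inv a \<in> carrier R" "inv a \<otimes> a = \<one>" using a a0 field_Units by auto
  have "(b \<otimes> inv a) \<otimes> (b \<otimes> inv a) = (a \<otimes> a \<oplus> b \<otimes> b) \<otimes> (inv a \<otimes> inv a) \<ominus> (inv a \<otimes> a) \<otimes> (inv a \<otimes> a)"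
    using a b ia(1) by algebra
  also have "\<dots> = \<zero> \<ominus> \<one>" using h ia a b by simp
  also have "\<dots> = \<ominus> \<one>" by algebra
  finally show False using minus_one_nonsq[of "b \<otimes> inv a"] b ia by simp
qed

lemma split2_card:
  "card {x \<in> V (Suc (Suc m)). P x} = (\<Sum>b\<in>carrier R. \<Sum>a\<in>carrier R. card {z \<in> V m. P ((z(m := a))(Suc m := b))})"
  using split_card[of "Suc m" P] split_card[of m] by simp

lemma split3_card:
  "card {x \<in> V (Suc (Suc (Suc m))). P x} = (\<Sum>c\<in>carrier R. \<Sum>b\<in>carrier R. \<Sum>a\<in>carrier R.
      card {z \<in> V m. P (((z(m := a))(Suc m := b))(Suc (Suc m) := c))})"
  using split_card[of "Suc (Suc m)" P] split2_card[of m] by simp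

lemma dotp_upd2:
  assumes "z \<in> V m" "z' \<in> V m" "a \<in> carrier R" "a' \<in> carrier R" "b \<in> carrier R" "b' \<in> carrier R"
  shows "dotp (Suc (Suc m)) ((z(m := a))(Suc m := b)) ((z'(m := a'))(Suc m := b')) = (dotp m z z' \<oplus> a \<otimes> a') \<oplus> b \<otimes> b'"
  using dotp_upd[OF upd_V[OF assms(1,3)] upd_V[OF assms(2,4)] assms(5,6)] dotp_upd[OF assms(1-4)] by simp

lemma dotp_upd3:
  assumes "z \<in> V m" "z' \<in> V m" "a \<in> carrier R" "a' \<in> carrier R" "b \<in> carrier R" "b' \<in> carrier R"
    "c \<in> carrier R" "c' \<in> carrier R"
  shows "dotp (Suc (Suc (Suc m))) (((z(m := a))(Suc m := b))(Suc (Suc m) := c)) (((z'(m := a'))(Suc m := b'))(Suc (Suc m) := c'))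
     = ((dotp m z z' \<oplus> a \<otimes> a') \<oplus> b \<otimes> b') \<oplus> c \<otimes> c'"
proof -
  have "((z(m := a))(Suc m := b)) \<in> V (Suc (Suc m))" "((z'(m := a'))(Suc m := b')) \<in> V (Suc (Suc m))"
    using upd_V assms by auto
  thus ?thesis using dotp_upd[of "((z(m := a))(Suc m := b))" "Suc (Suc m)" "((z'(m := a'))(Suc m := b'))" c c']
      dotp_upd2[OF assms(1-6)] assms(7,8) by simp
qed

definition rep2 :: "nat \<Rightarrow> 'a \<Rightarrow> 'a \<Rightarrow> (nat \<Rightarrow> 'a)" where
  "rep2 m \<alpha> \<beta> = ((zv m)(m := \<alpha>))(Suc m := \<beta>)"

lemma rep2_V: "\<alpha> \<in> carrier R \<Longrightarrow> \<beta> \<in> carrier R \<Longrightarrow> rep2 m \<alpha> \<beta> \<in> V (Suc (Suc m))"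
  unfolding rep2_def using upd_V zv_V by simp

lemma rep2_Q: "\<alpha> \<in> carrier R \<Longrightarrow> \<beta> \<in> carrier R \<Longrightarrow> dotp (Suc (Suc m)) (rep2 m \<alpha> \<beta>) (rep2 m \<alpha> \<beta>) = \<alpha> \<otimes> \<alpha> \<oplus> \<beta> \<otimes> \<beta>"
  unfolding rep2_def using dotp_upd2[OF zv_V zv_V] dotp_zv[OF zv_V] by simp

lemma F_rep2_sum:
  assumes al: "\<alpha> \<in> carrier R" and be: "\<beta> \<in> carrier R"
  shows "F (Suc (Suc m)) (rep2 m \<alpha> \<beta>) = (\<Sum>b\<in>carrier R. \<Sum>a\<in>carrier R.
            if a \<otimes> \<alpha> \<oplus> b \<otimes> \<beta> = \<zero> then N m (\<ominus> (a \<otimes> a \<oplus> b \<otimes> b)) else 0)"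
  unfolding F_def split2_card
proof (intro sum.cong[OF refl])
  fix a b assume b: "b \<in> carrier R" and a: "a \<in> carrier R"
  have "{z \<in> V m. dotp (Suc (Suc m)) ((z(m := a))(Suc m := b)) ((z(m := a))(Suc m := b)) = \<zero> \<and>
                   dotp (Suc (Suc m)) ((z(m := a))(Suc m := b)) (rep2 m \<alpha> \<beta>) = \<zero>}
      = {z \<in> V m. dotp m z z = \<ominus> (a \<otimes> a \<oplus> b \<otimes> b) \<and> a \<otimes> \<alpha> \<oplus> b \<otimes> \<beta> = \<zero>}"
  proof (rule Collect_cong)
    fix z
    show "(z \<in> V m \<and> dotp (Suc (Suc m)) ((z(m := a))(Suc m := b)) ((z(m := a))(Suc m := b)) = \<zero> \<and>
                   dotp (Suc (Suc m)) ((z(m := a))(Suc m := b)) (rep2 m \<alpha> \<beta>) = \<zero>) =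
          (z \<in> V m \<and> dotp m z z = \<ominus> (a \<otimes> a \<oplus> b \<otimes> b) \<and> a \<otimes> \<alpha> \<oplus> b \<otimes> \<beta> = \<zero>)"
    proof (cases "z \<in> V m")
      case True
      have zz: "dotp m z z \<in> carrier R" using dotp_closed[OF True True] .
      have e1: "dotp (Suc (Suc m)) ((z(m := a))(Suc m := b)) ((z(m := a))(Suc m := b)) = dotp m z z \<oplus> (a \<otimes> a \<oplus> b \<otimes> b)"
        using dotp_upd2[OF True True a a b b] zz a b by (simp add: a_assoc)
      have e2: "dotp (Suc (Suc m)) ((z(m := a))(Suc m := b)) (rep2 m \<alpha> \<beta>) = a \<otimes> \<alpha> \<oplus> b \<otimes> \<beta>"
        unfolding rep2_def using dotp_upd2[OF True zv_V a al b be] dotp_zv[OF True] a b al be by simp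
      have "(dotp m z z \<oplus> (a \<otimes> a \<oplus> b \<otimes> b) = \<zero>) = (dotp m z z = \<zero> \<ominus> (a \<otimes> a \<oplus> b \<otimes> b))"
        using eq_shift[OF zz, of "a \<otimes> a \<oplus> b \<otimes> b" \<zero>] a b by simp
      also have "\<zero> \<ominus> (a \<otimes> a \<oplus> b \<otimes> b) = \<ominus> (a \<otimes> a \<oplus> b \<otimes> b)" using a b by algebra
      finally show ?thesis using e1 e2 True by simp
    qed simp
  qed
  thus "card {z \<in> V m. dotp (Suc (Suc m)) ((z(m := a))(Suc m := b)) ((z(m := a))(Suc m := b)) = \<zero> \<and>
                   dotp (Suc (Suc m)) ((z(m := a))(Suc m := b)) (rep2 m \<alpha> \<beta>) = \<zero>} =
        (if a \<otimes> \<alpha> \<oplus> b \<otimes> \<beta> = \<zero> then N m (\<ominus> (a \<otimes> a \<oplus> b \<otimes> b)) else 0)"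
    unfolding N_def by simp
qed

lemma F_rep2:
  assumes al: "\<alpha> \<in> carrier R" and be: "\<beta> \<in> carrier R" and b0: "\<beta> \<noteq> \<zero>"
  shows "real (F (Suc (Suc (2*j+2))) (rep2 (2*j+2) \<alpha> \<beta>)) = real q ^ (2*j+2)"
proof -
  let ?m = "2*j+2"
  have ib: "inv \<beta> \<in> carrier R" "\<beta> \<otimes> inv \<beta> = \<one>" "inv \<beta> \<otimes> \<beta> = \<one>" using be b0 field_Units by auto
  define c where "c = (\<lambda>a. \<ominus> (a \<otimes> \<alpha>) \<otimes> inv \<beta>)"
  have cc: "c a \<in> carrier R" if "a \<in> carrier R" for a using that al ib c_def by simp
  have cond: "(a \<otimes> \<alpha> \<oplus> b \<otimes> \<beta> = \<zero>) = (b = c a)" if a: "a \<in> carrier R" and b: "b \<in> carrier R" for a b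
  proof
    assume h: "a \<otimes> \<alpha> \<oplus> b \<otimes> \<beta> = \<zero>"
    have "b \<otimes> \<beta> = \<ominus> (a \<otimes> \<alpha>)" using sum0_neg[OF _ _ h] a b al be by simp
    hence "b \<otimes> \<beta> \<otimes> inv \<beta> = \<ominus> (a \<otimes> \<alpha>) \<otimes> inv \<beta>" by simp
    thus "b = c a" using ib b be unfolding c_def by (simp add: m_assoc)
  next
    assume h: "b = c a"
    have "a \<otimes> \<alpha> \<oplus> (\<ominus> (a \<otimes> \<alpha>) \<otimes> inv \<beta>) \<otimes> \<beta> = a \<otimes> \<alpha> \<ominus> (a \<otimes> \<alpha>) \<otimes> (inv \<beta> \<otimes> \<beta>)"
      using a al ib(1) be by algebra
    also have "\<dots> = \<zero>" using ib a al by simp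
    finally show "a \<otimes> \<alpha> \<oplus> b \<otimes> \<beta> = \<zero>" using h c_def by simp
  qed
  have "real (F (Suc (Suc ?m)) (rep2 ?m \<alpha> \<beta>)) = (\<Sum>b\<in>carrier R. \<Sum>a\<in>carrier R.
            real (if a \<otimes> \<alpha> \<oplus> b \<otimes> \<beta> = \<zero> then N ?m (\<ominus> (a \<otimes> a \<oplus> b \<otimes> b)) else 0))"
    using F_rep2_sum[OF al be, of ?m] by simp
  also have "\<dots> = (\<Sum>a\<in>carrier R. \<Sum>b\<in>carrier R.
            real (if a \<otimes> \<alpha> \<oplus> b \<otimes> \<beta> = \<zero> then N ?m (\<ominus> (a \<otimes> a \<oplus> b \<otimes> b)) else 0))"
    by (rule sum.swap)
  also have "\<dots> = (\<Sum>a\<in>carrier R. real (N ?m (\<ominus> (a \<otimes> a \<oplus> c a \<otimes> c a))))"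
  proof (rule sum.cong[OF refl])
    fix a assume a: "a \<in> carrier R"
    have "(\<Sum>b\<in>carrier R. real (if a \<otimes> \<alpha> \<oplus> b \<otimes> \<beta> = \<zero> then N ?m (\<ominus> (a \<otimes> a \<oplus> b \<otimes> b)) else 0))
        = (\<Sum>b\<in>carrier R. if b = c a then real (N ?m (\<ominus> (a \<otimes> a \<oplus> c a \<otimes> c a))) else 0)"
      by (rule sum.cong[OF refl]) (use cond a in auto)
    also have "\<dots> = real (N ?m (\<ominus> (a \<otimes> a \<oplus> c a \<otimes> c a)))"
      using fin cc[OF a] by (simp add: sum.delta)
    finally show "(\<Sum>b\<in>carrier R. real (if a \<otimes> \<alpha> \<oplus> b \<otimes> \<beta> = \<zero> then N ?m (\<ominus> (a \<otimes> a \<oplus> b \<otimes> b)) else 0))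
        = real (N ?m (\<ominus> (a \<otimes> a \<oplus> c a \<otimes> c a)))" .
  qed
  also have "\<dots> = real (N ?m (\<ominus> (\<zero> \<otimes> \<zero> \<oplus> c \<zero> \<otimes> c \<zero>))) + (\<Sum>a\<in>carrier R - {\<zero>}. real (N ?m (\<ominus> (a \<otimes> a \<oplus> c a \<otimes> c a))))"
    using fin by (subst sum.remove[of _ \<zero>]) auto
  also have "c \<zero> = \<zero>" unfolding c_def using al ib by simp
  also have "(\<Sum>a\<in>carrier R - {\<zero>}. real (N ?m (\<ominus> (a \<otimes> a \<oplus> c a \<otimes> c a)))) = (\<Sum>a\<in>carrier R - {\<zero>}. real q ^ (2*j+1) + (- real q) ^ j)"
  proof (rule sum.cong[OF refl])
    fix a assume a: "a \<in> carrier R - {\<zero>}"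
    have ac: "a \<in> carrier R" using a by simp
    have "a \<otimes> a \<oplus> c a \<otimes> c a \<noteq> \<zero>" using sumsq_zero[OF ac cc[OF ac]] a by auto
    hence ne: "\<ominus> (a \<otimes> a \<oplus> c a \<otimes> c a) \<noteq> \<zero>" using ac cc[OF ac] by (metis add.inv_eq_1_iff a_closed m_closed)
    show "real (N ?m (\<ominus> (a \<otimes> a \<oplus> c a \<otimes> c a))) = real q ^ (2*j+1) + (- real q) ^ j"
      using N_even[of "\<ominus> (a \<otimes> a \<oplus> c a \<otimes> c a)" j] ne ac cc[OF ac] by simp
  qed
  also have "\<dots> = (real q - 1) * (real q ^ (2*j+1) + (- real q) ^ j)"
    using fin q_ge3 by (simp add: card_Diff_singleton of_nat_diff)
  also have "real (N ?m (\<ominus> (\<zero> \<otimes> \<zero> \<oplus> \<zero> \<otimes> \<zero>))) = real q ^ (2*j+1) + (- real q) ^ j * (1 - real q)"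
    using N_even[of \<zero> j] by simp
  finally show ?thesis by (simp add: algebra_simps)
qed

definition rep3 :: "nat \<Rightarrow> 'a \<Rightarrow> 'a \<Rightarrow> (nat \<Rightarrow> 'a)" where
  "rep3 m \<alpha> \<beta> = (((zv m)(m := \<alpha>))(Suc m := \<beta>))(Suc (Suc m) := \<one>)"

lemma rep3_V: "\<alpha> \<in> carrier R \<Longrightarrow> \<beta> \<in> carrier R \<Longrightarrow> rep3 m \<alpha> \<beta> \<in> V (Suc (Suc (Suc m)))"
  unfolding rep3_def using upd_V zv_V by simp

lemma rep3_Q: "\<alpha> \<in> carrier R \<Longrightarrow> \<beta> \<in> carrier R \<Longrightarrow>
   dotp (Suc (Suc (Suc m))) (rep3 m \<alpha> \<beta>) (rep3 m \<alpha> \<beta>) = (\<alpha> \<otimes> \<alpha> \<oplus> \<beta> \<otimes> \<beta>) \<oplus> \<one>"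
  unfolding rep3_def using dotp_upd3[OF zv_V zv_V] dotp_zv[OF zv_V] by simp

lemma rep3_last: "rep3 m \<alpha> \<beta> (Suc (Suc (Suc m)) - 1) = \<one>"
  unfolding rep3_def by simp

lemma F_rep3_sum:
  assumes al: "\<alpha> \<in> carrier R" and be: "\<beta> \<in> carrier R"
  shows "F (Suc (Suc (Suc m))) (rep3 m \<alpha> \<beta>) = (\<Sum>c\<in>carrier R. \<Sum>b\<in>carrier R. \<Sum>a\<in>carrier R.
            if (a \<otimes> \<alpha> \<oplus> b \<otimes> \<beta>) \<oplus> c = \<zero> then N m (\<ominus> ((a \<otimes> a \<oplus> b \<otimes> b) \<oplus> c \<otimes> c)) else 0)"
  unfolding F_def split3_card
proof (intro sum.cong[OF refl])
  fix a b c assume c: "c \<in> carrier R" and b: "b \<in> carrier R" and a: "a \<in> carrier R"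
  let ?x = "\<lambda>z. ((z(m := a))(Suc m := b))(Suc (Suc m) := c)"
  have "{z \<in> V m. dotp (Suc (Suc (Suc m))) (?x z) (?x z) = \<zero> \<and> dotp (Suc (Suc (Suc m))) (?x z) (rep3 m \<alpha> \<beta>) = \<zero>}
      = {z \<in> V m. dotp m z z = \<ominus> ((a \<otimes> a \<oplus> b \<otimes> b) \<oplus> c \<otimes> c) \<and> (a \<otimes> \<alpha> \<oplus> b \<otimes> \<beta>) \<oplus> c = \<zero>}"
  proof (rule Collect_cong)
    fix z
    show "(z \<in> V m \<and> dotp (Suc (Suc (Suc m))) (?x z) (?x z) = \<zero> \<and> dotp (Suc (Suc (Suc m))) (?x z) (rep3 m \<alpha> \<beta>) = \<zero>) =
          (z \<in> V m \<and> dotp m z z = \<ominus> ((a \<otimes> a \<oplus> b \<otimes> b) \<oplus> c \<otimes> c) \<and> (a \<otimes> \<alpha> \<oplus> b \<otimes> \<beta>) \<oplus> c = \<zero>)"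
    proof (cases "z \<in> V m")
      case True
      have zz: "dotp m z z \<in> carrier R" using dotp_closed[OF True True] .
      have e1: "dotp (Suc (Suc (Suc m))) (?x z) (?x z) = dotp m z z \<oplus> ((a \<otimes> a \<oplus> b \<otimes> b) \<oplus> c \<otimes> c)"
        using dotp_upd3[OF True True a a b b c c] zz a b c by (simp add: a_assoc)
      have e2: "dotp (Suc (Suc (Suc m))) (?x z) (rep3 m \<alpha> \<beta>) = (a \<otimes> \<alpha> \<oplus> b \<otimes> \<beta>) \<oplus> c"
        unfolding rep3_def using dotp_upd3[OF True zv_V a al b be c one_closed] dotp_zv[OF True] a b al be c by simp
      have "(dotp m z z \<oplus> ((a \<otimes> a \<oplus> b \<otimes> b) \<oplus> c \<otimes> c) = \<zero>) = (dotp m z z = \<zero> \<ominus> ((a \<otimes> a \<oplus> b \<otimes> b) \<oplus> c \<otimes> c))"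
        using eq_shift[OF zz, of "(a \<otimes> a \<oplus> b \<otimes> b) \<oplus> c \<otimes> c" \<zero>] a b c by simp
      also have "\<zero> \<ominus> ((a \<otimes> a \<oplus> b \<otimes> b) \<oplus> c \<otimes> c) = \<ominus> ((a \<otimes> a \<oplus> b \<otimes> b) \<oplus> c \<otimes> c)" using a b c by algebra
      finally show ?thesis using e1 e2 True by simp
    qed simp
  qed
  thus "card {z \<in> V m. dotp (Suc (Suc (Suc m))) (?x z) (?x z) = \<zero> \<and> dotp (Suc (Suc (Suc m))) (?x z) (rep3 m \<alpha> \<beta>) = \<zero>} =
        (if (a \<otimes> \<alpha> \<oplus> b \<otimes> \<beta>) \<oplus> c = \<zero> then N m (\<ominus> ((a \<otimes> a \<oplus> b \<otimes> b) \<oplus> c \<otimes> c)) else 0)"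
    unfolding N_def by simp
qed

lemma F_rep3:
  assumes al: "\<alpha> \<in> carrier R" and be: "\<beta> \<in> carrier R" and s1: "\<alpha> \<otimes> \<alpha> \<oplus> \<beta> \<otimes> \<beta> = \<ominus> \<one>"
  shows "real (F (Suc (Suc (Suc (2*j+1)))) (rep3 (2*j+1) \<alpha> \<beta>)) = real q ^ (2*j+2) + real q * (real q - 1) * (- real q) ^ j"
proof -
  let ?m = "2*j+1"
  have b0: "\<beta> \<noteq> \<zero>"
  proof
    assume "\<beta> = \<zero>"
    hence "\<alpha> \<otimes> \<alpha> = \<ominus> \<one>" using s1 al by simp
    thus False using minus_one_nonsq[OF al] by simp
  qed
  have ib: "inv \<beta> \<in> carrier R" "\<beta> \<otimes> inv \<beta> = \<one>" "inv \<beta> \<otimes> \<beta> = \<one>" using be b0 field_Units by auto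
  define t where "t = (\<lambda>a b. \<beta> \<otimes> a \<ominus> \<alpha> \<otimes> b)"
  have tc: "t a b \<in> carrier R" if "a \<in> carrier R" "b \<in> carrier R" for a b using that al be t_def by simp
  have ident: "\<ominus> ((a \<otimes> a \<oplus> b \<otimes> b) \<oplus> (\<ominus> (a \<otimes> \<alpha> \<oplus> b \<otimes> \<beta>)) \<otimes> (\<ominus> (a \<otimes> \<alpha> \<oplus> b \<otimes> \<beta>))) = t a b \<otimes> t a b"
    if a: "a \<in> carrier R" and b: "b \<in> carrier R" for a b
  proof -
    have "\<ominus> ((a \<otimes> a \<oplus> b \<otimes> b) \<oplus> (\<ominus> (a \<otimes> \<alpha> \<oplus> b \<otimes> \<beta>)) \<otimes> (\<ominus> (a \<otimes> \<alpha> \<oplus> b \<otimes> \<beta>))) \<ominus> t a b \<otimes> t a b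
        = \<ominus> (a \<otimes> a \<oplus> b \<otimes> b) \<otimes> (\<one> \<oplus> (\<alpha> \<otimes> \<alpha> \<oplus> \<beta> \<otimes> \<beta>))"
      unfolding t_def using a b al be by algebra
    also have "\<dots> = \<ominus> (a \<otimes> a \<oplus> b \<otimes> b) \<otimes> (\<one> \<oplus> \<ominus> \<one>)" using s1 by simp
    also have "\<dots> = \<zero>" using a b by algebra
    finally show ?thesis using a b al be tc[OF a b] by (metis r_right_minus_eq a_closed m_closed add.inv_closed)
  qed
  have "real (F (Suc (Suc (Suc ?m))) (rep3 ?m \<alpha> \<beta>)) = (\<Sum>c\<in>carrier R. \<Sum>b\<in>carrier R. \<Sum>a\<in>carrier R.
            real (if (a \<otimes> \<alpha> \<oplus> b \<otimes> \<beta>) \<oplus> c = \<zero> then N ?m (\<ominus> ((a \<otimes> a \<oplus> b \<otimes> b) \<oplus> c \<otimes> c)) else 0))"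
    using F_rep3_sum[OF al be, of ?m] by simp
  also have "\<dots> = (\<Sum>b\<in>carrier R. \<Sum>c\<in>carrier R. \<Sum>a\<in>carrier R.
            real (if (a \<otimes> \<alpha> \<oplus> b \<otimes> \<beta>) \<oplus> c = \<zero> then N ?m (\<ominus> ((a \<otimes> a \<oplus> b \<otimes> b) \<oplus> c \<otimes> c)) else 0))"
    by (rule sum.swap)
  also have "\<dots> = (\<Sum>b\<in>carrier R. \<Sum>a\<in>carrier R. \<Sum>c\<in>carrier R.
            real (if (a \<otimes> \<alpha> \<oplus> b \<otimes> \<beta>) \<oplus> c = \<zero> then N ?m (\<ominus> ((a \<otimes> a \<oplus> b \<otimes> b) \<oplus> c \<otimes> c)) else 0))"
    by (rule sum.cong[OF refl]) (rule sum.swap)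
  also have "\<dots> = (\<Sum>b\<in>carrier R. \<Sum>a\<in>carrier R. real (N ?m (t a b \<otimes> t a b)))"
  proof (intro sum.cong[OF refl])
    fix a b assume b: "b \<in> carrier R" and a: "a \<in> carrier R"
    let ?c0 = "\<ominus> (a \<otimes> \<alpha> \<oplus> b \<otimes> \<beta>)"
    have c0: "?c0 \<in> carrier R" using a b al be by simp
    have "(\<Sum>c\<in>carrier R. real (if (a \<otimes> \<alpha> \<oplus> b \<otimes> \<beta>) \<oplus> c = \<zero> then N ?m (\<ominus> ((a \<otimes> a \<oplus> b \<otimes> b) \<oplus> c \<otimes> c)) else 0))
        = (\<Sum>c\<in>carrier R. if c = ?c0 then real (N ?m (\<ominus> ((a \<otimes> a \<oplus> b \<otimes> b) \<oplus> ?c0 \<otimes> ?c0))) else 0)"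
    proof (rule sum.cong[OF refl])
      fix c assume c: "c \<in> carrier R"
      have "((a \<otimes> \<alpha> \<oplus> b \<otimes> \<beta>) \<oplus> c = \<zero>) = (c = ?c0)"
      proof
        assume "(a \<otimes> \<alpha> \<oplus> b \<otimes> \<beta>) \<oplus> c = \<zero>"
        thus "c = ?c0" using sum0_neg[of "a \<otimes> \<alpha> \<oplus> b \<otimes> \<beta>" c] a b al be c by simp
      next
        assume "c = ?c0"
        thus "(a \<otimes> \<alpha> \<oplus> b \<otimes> \<beta>) \<oplus> c = \<zero>" using a b al be by (simp add: r_neg)
      qed
      thus "real (if (a \<otimes> \<alpha> \<oplus> b \<otimes> \<beta>) \<oplus> c = \<zero> then N ?m (\<ominus> ((a \<otimes> a \<oplus> b \<otimes> b) \<oplus> c \<otimes> c)) else 0)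
          = (if c = ?c0 then real (N ?m (\<ominus> ((a \<otimes> a \<oplus> b \<otimes> b) \<oplus> ?c0 \<otimes> ?c0))) else 0)" by simp
    qed
    also have "\<dots> = real (N ?m (\<ominus> ((a \<otimes> a \<oplus> b \<otimes> b) \<oplus> ?c0 \<otimes> ?c0)))"
      using fin c0 by (simp add: sum.delta)
    also have "\<dots> = real (N ?m (t a b \<otimes> t a b))" using ident[OF a b] by simp
    finally show "(\<Sum>c\<in>carrier R. real (if (a \<otimes> \<alpha> \<oplus> b \<otimes> \<beta>) \<oplus> c = \<zero> then N ?m (\<ominus> ((a \<otimes> a \<oplus> b \<otimes> b) \<oplus> c \<otimes> c)) else 0))
        = real (N ?m (t a b \<otimes> t a b))" .
  qed
  also have "\<dots> = (\<Sum>b\<in>carrier R. \<Sum>s\<in>carrier R. real (N ?m (s \<otimes> s)))"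
  proof (rule sum.cong[OF refl])
    fix b assume b: "b \<in> carrier R"
    have inv1: "t ((s \<oplus> \<alpha> \<otimes> b) \<otimes> inv \<beta>) b = s" if s: "s \<in> carrier R" for s
    proof -
      have "t ((s \<oplus> \<alpha> \<otimes> b) \<otimes> inv \<beta>) b = (s \<oplus> \<alpha> \<otimes> b) \<otimes> (\<beta> \<otimes> inv \<beta>) \<ominus> \<alpha> \<otimes> b"
        unfolding t_def using s b al be ib(1) by algebra
      also have "\<dots> = s" using ib s b al by simp algebra
      finally show ?thesis .
    qed
    have inv2: "(t a b \<oplus> \<alpha> \<otimes> b) \<otimes> inv \<beta> = a" if a: "a \<in> carrier R" for a
    proof -
      have "(t a b \<oplus> \<alpha> \<otimes> b) \<otimes> inv \<beta> = a \<otimes> (\<beta> \<otimes> inv \<beta>)"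
        unfolding t_def using a b al be ib(1) by algebra
      also have "\<dots> = a" using ib a by simp
      finally show ?thesis .
    qed
    show "(\<Sum>a\<in>carrier R. real (N ?m (t a b \<otimes> t a b))) = (\<Sum>s\<in>carrier R. real (N ?m (s \<otimes> s)))"
      by (rule sum.reindex_bij_witness[where i="\<lambda>s. (s \<oplus> \<alpha> \<otimes> b) \<otimes> inv \<beta>" and j="\<lambda>a. t a b"])
         (use inv1 inv2 tc b al ib in auto)
  qed
  also have "\<dots> = real q * (\<Sum>s\<in>carrier R. real (N ?m (s \<otimes> s)))" by simp
  also have "(\<Sum>s\<in>carrier R. real (N ?m (s \<otimes> s))) = real (N ?m (\<zero> \<otimes> \<zero>)) + (\<Sum>s\<in>carrier R - {\<zero>}. real (N ?m (s \<otimes> s)))"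
    using fin by (subst sum.remove[of _ \<zero>]) auto
  also have "(\<Sum>s\<in>carrier R - {\<zero>}. real (N ?m (s \<otimes> s))) = (\<Sum>s\<in>carrier R - {\<zero>}. real q ^ (2*j) + (- real q) ^ j)"
    by (rule sum.cong[OF refl]) (use N_oddsq in auto)
  also have "\<dots> = (real q - 1) * (real q ^ (2*j) + (- real q) ^ j)"
    using fin q_ge3 by (simp add: card_Diff_singleton of_nat_diff)
  also have "real (N ?m (\<zero> \<otimes> \<zero>)) = real q ^ (2*j)" using N_odd0[of j] by simp
  finally show ?thesis by (simp add: algebra_simps)
qed

lemma F_bound:
  assumes k: "k > 0" and v: "v \<in> V (4*k+2)" and i: "i < 4*k+2" and vi: "v i \<noteq> \<zero>"
  shows "real (F (4*k+2) v) \<le> real q ^ (4*k)"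
proof -
  define j where "j = 2*k - 1"
  have d2: "Suc (Suc (2*j+2)) = 4*k+2" and d3: "Suc (Suc (Suc (2*j+1))) = 4*k+2" and jj: "2*j+2 = 4*k"
    using k j_def by auto
  have jodd: "odd j" using k j_def by simp
  have Qc: "dotp (4*k+2) v v \<in> carrier R" using dotp_closed[OF v v] .
  show ?thesis
  proof (cases "dotp (4*k+2) v v = \<zero>")
    case False
    obtain a b where ab: "a \<in> carrier R" "b \<in> carrier R" "a \<otimes> a \<oplus> b \<otimes> b = dotp (4*k+2) v v"
      using sum_two_squares[OF Qc] by blast
    obtain \<alpha> \<beta> where al: "\<alpha> \<in> carrier R" and be: "\<beta> \<in> carrier R" and b0: "\<beta> \<noteq> \<zero>"
      and s: "\<alpha> \<otimes> \<alpha> \<oplus> \<beta> \<otimes> \<beta> = dotp (4*k+2) v v"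
    proof (cases "b = \<zero>")
      case True
      hence "a \<noteq> \<zero>" using ab False by auto
      moreover have "b \<otimes> b \<oplus> a \<otimes> a = dotp (4*k+2) v v" using ab by (simp add: a_comm)
      ultimately show ?thesis using that ab by blast
    next
      case False
      then show ?thesis using that ab by blast
    qed
    have wV: "rep2 (2*j+2) \<alpha> \<beta> \<in> V (4*k+2)" using rep2_V[OF al be, of "2*j+2"] d2 by simp
    have wQ: "dotp (4*k+2) (rep2 (2*j+2) \<alpha> \<beta>) (rep2 (2*j+2) \<alpha> \<beta>) = dotp (4*k+2) v v"
      using rep2_Q[OF al be, of "2*j+2"] d2 s by simp
    have "F (4*k+2) v = F (4*k+2) (rep2 (2*j+2) \<alpha> \<beta>)"
      using F_noniso[OF v wV wQ[symmetric] False] .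
    also have "real \<dots> = real q ^ (2*j+2)" unfolding d2[symmetric] by (rule F_rep2[OF al be b0])
    also have "\<dots> = real q ^ (4*k)" using jj by (simp only:)
    finally show ?thesis by simp
  next
    case True
    obtain \<alpha> \<beta> where al: "\<alpha> \<in> carrier R" and be: "\<beta> \<in> carrier R" and s: "\<alpha> \<otimes> \<alpha> \<oplus> \<beta> \<otimes> \<beta> = \<ominus> \<one>"
      using sum_two_squares[of "\<ominus> \<one>"] by auto
    have wV: "rep3 (2*j+1) \<alpha> \<beta> \<in> V (4*k+2)" using rep3_V[OF al be, of "2*j+1"] d3 by simp
    have wQ: "dotp (4*k+2) (rep3 (2*j+1) \<alpha> \<beta>) (rep3 (2*j+1) \<alpha> \<beta>) = \<zero>"
      using rep3_Q[OF al be, of "2*j+1"] d3 s by (simp add: l_neg)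
    have wl: "rep3 (2*j+1) \<alpha> \<beta> (4*k+2 - 1) = \<one>" using rep3_last[of "2*j+1" \<alpha> \<beta>] d3 by simp
    have "F (4*k+2) v = F (4*k+2) (rep3 (2*j+1) \<alpha> \<beta>)"
      using F_iso[OF v wV True wQ i vi wl] .
    also have "real \<dots> = real q ^ (2*j+2) + real q * (real q - 1) * (- real q) ^ j"
      unfolding d3[symmetric] by (rule F_rep3[OF al be s])
    also have "(- real q) ^ j = - (real q ^ j)" using jodd by simp
    finally have "real (F (4*k+2) v) = real q ^ (2*j+2) - real q * (real q - 1) * real q ^ j" by simp
    moreover have "real q * (real q - 1) * real q ^ j \<ge> 0" using q_ge3 by simp
    moreover have "real q ^ (2*j+2) = real q ^ (4*k)" using jj by (simp only:)
    ultimately show ?thesis by linarith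
  qed
qed

lemma cs_sum:
  fixes f :: "'c \<Rightarrow> real"
  assumes "finite T"
  shows "(\<Sum>t\<in>T. f t)^2 \<le> real (card T) * (\<Sum>t\<in>T. (f t)^2)"
proof -
  have "0 \<le> (\<Sum>s\<in>T. \<Sum>t\<in>T. (f s - f t)^2)" by (intro sum_nonneg) auto
  also have "\<dots> = (\<Sum>s\<in>T. \<Sum>t\<in>T. (f s)^2 + (f t)^2 - 2 * f s * f t)"
    by (simp add: power2_diff)
  also have "\<dots> = 2 * real (card T) * (\<Sum>t\<in>T. (f t)^2) - 2 * (\<Sum>t\<in>T. f t)^2"
    by (simp add: sum.distrib sum_subtractf sum_distrib_left sum_distrib_right power2_eq_square
        sum.swap[of "\<lambda>s t. (f t)^2"] algebra_simps)
  finally show ?thesis by simp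
qed

lemma card_as_sum: "finite A \<Longrightarrow> real (card {y \<in> A. P y}) = (\<Sum>y\<in>A. if P y then 1 else 0)"
  by (simp add: sum.inter_filter[symmetric])

lemma sum_delta2:
  assumes a: "a \<in> carrier R" and b: "b \<in> carrier R"
  shows "(\<Sum>t\<in>carrier R. (if a = t then 1 else 0) * (if b = t then 1 else 0) :: real) = (if a = b then 1 else 0)"
proof -
  have "(\<Sum>t\<in>carrier R. (if a = t then 1 else 0) * (if b = t then 1 else 0) :: real)
      = (\<Sum>t\<in>carrier R. if t = a then (if b = a then 1 else 0) else 0)"
    by (rule sum.cong) auto
  also have "\<dots> = (if a = b then 1 else 0)" using fin a by (simp add: sum.delta')
  finally show ?thesis .
qed

lemma nu_sum:
  assumes A: "A \<subseteq> V n" "finite A" and x: "x \<in> V n"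
  shows "(\<Sum>t\<in>carrier R. real (card {y \<in> A. dotp n x y = t})) = real (card A)"
proof -
  have "card A = (\<Sum>t\<in>carrier R. card {y \<in> A. dotp n x y = t})"
    by (rule card_fibers) (use A fin dotp_closed[OF x] in auto)
  hence "real (card A) = real (\<Sum>t\<in>carrier R. card {y \<in> A. dotp n x y = t})" by (rule arg_cong)
  also have "\<dots> = (\<Sum>t\<in>carrier R. real (card {y \<in> A. dotp n x y = t}))" by (rule of_nat_sum)
  finally show ?thesis by simp
qed

lemma nu_sq_sum:
  assumes A: "A \<subseteq> V n" "finite A" and x: "x \<in> V n"
  shows "(\<Sum>t\<in>carrier R. (real (card {y \<in> A. dotp n x y = t}))^2)
       = (\<Sum>y\<in>A. \<Sum>y'\<in>A. if dotp n x y = dotp n x y' then 1 else 0)"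
proof -
  have "(\<Sum>t\<in>carrier R. (real (card {y \<in> A. dotp n x y = t}))^2)
      = (\<Sum>t\<in>carrier R. \<Sum>y\<in>A. \<Sum>y'\<in>A. (if dotp n x y = t then 1 else 0) * (if dotp n x y' = t then 1 else 0))"
  proof (rule sum.cong[OF refl])
    fix t
    show "(real (card {y \<in> A. dotp n x y = t}))^2 = (\<Sum>y\<in>A. \<Sum>y'\<in>A. (if dotp n x y = t then 1 else 0) * (if dotp n x y' = t then 1 else 0))"
      using card_as_sum[OF A(2), of "\<lambda>y. dotp n x y = t"] by (simp add: power2_eq_square sum_product)
  qed
  also have "\<dots> = (\<Sum>y\<in>A. \<Sum>y'\<in>A. \<Sum>t\<in>carrier R. (if dotp n x y = t then 1 else 0) * (if dotp n x y' = t then 1 else 0))"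
    by (simp add: sum.swap[of _ "carrier R"])
  also have "\<dots> = (\<Sum>y\<in>A. \<Sum>y'\<in>A. if dotp n x y = dotp n x y' then 1 else 0)"
    by (intro sum.cong[OF refl] sum_delta2) (use A dotp_closed[OF x] in auto)
  finally show ?thesis .
qed

lemma pair_bound:
  assumes k: "k > 0" and y: "y \<in> V (4*k+2)" and y': "y' \<in> V (4*k+2)" and ne: "y \<noteq> y'"
  shows "real (card {x \<in> V (4*k+2). dotp (4*k+2) x x = \<zero> \<and> dotp (4*k+2) x y = dotp (4*k+2) x y'}) \<le> real q ^ (4*k)"
proof -
  let ?d = "4*k+2"
  have m1: "\<ominus> \<one> \<in> carrier R" by simp
  define w where "w = lin ?d y (\<ominus> \<one>) y'"
  have wV: "w \<in> V ?d" unfolding w_def using lin_V[OF y y' m1] .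
  obtain i where i: "i < ?d" and yi: "y i \<noteq> y' i" using V_eqI[OF y y'] ne by auto
  have yc: "y i \<in> carrier R" "y' i \<in> carrier R" using y y' i V_carrier by auto
  have wi: "w i \<noteq> \<zero>"
  proof
    assume "w i = \<zero>"
    hence "y i \<oplus> \<ominus> \<one> \<otimes> y' i = \<zero>" unfolding w_def using lin_apply[OF i] by metis
    hence "y i \<ominus> y' i = \<zero>" using yc by (simp add: a_minus_def l_minus)
    thus False using yi yc r_right_minus_eq by blast
  qed
  have "{x \<in> V ?d. dotp ?d x x = \<zero> \<and> dotp ?d x y = dotp ?d x y'} = {x \<in> V ?d. dotp ?d x x = \<zero> \<and> dotp ?d x w = \<zero>}"
  proof (rule Collect_cong)
    fix x show "(x \<in> V ?d \<and> dotp ?d x x = \<zero> \<and> dotp ?d x y = dotp ?d x y') = (x \<in> V ?d \<and> dotp ?d x x = \<zero> \<and> dotp ?d x w = \<zero>)"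
    proof (cases "x \<in> V ?d")
      case True
      have "dotp ?d x w = dotp ?d x y \<ominus> dotp ?d x y'"
        unfolding w_def using dotp_lin2[OF y y' True m1] dotp_closed[OF True y] dotp_closed[OF True y']
        by (simp add: a_minus_def l_minus)
      moreover have "(dotp ?d x y \<ominus> dotp ?d x y' = \<zero>) = (dotp ?d x y = dotp ?d x y')"
        using dotp_closed[OF True y] dotp_closed[OF True y'] by (rule r_right_minus_eq)
      ultimately show ?thesis using True by simp
    qed simp
  qed
  hence "card {x \<in> V ?d. dotp ?d x x = \<zero> \<and> dotp ?d x y = dotp ?d x y'} = F ?d w" unfolding F_def by simp
  thus ?thesis using F_bound[OF k wV i wi] by simp
qed

lemma card_S0: "real (card {x \<in> V (4*k+2). dotp (4*k+2) x x = \<zero>}) = real q ^ (4*k+1) - (real q - 1) * real q ^ (2*k)"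
proof -
  have "real (N (2*(2*k)+2) \<zero>) = real q ^ (2*(2*k)+1) + (- real q) ^ (2*k) * (1 - real q)"
    using N_even[of \<zero> "2*k"] by simp
  moreover have "(- real q) ^ (2*k) = real q ^ (2*k)" by (simp add: power_mult)
  moreover have "2*(2*k)+2 = 4*k+2" "2*(2*k)+1 = 4*k+1" by auto
  ultimately show ?thesis unfolding N_def by (simp add: algebra_simps)
qed

lemma main_count:
  assumes k: "k > 0" and A: "A \<subseteq> {x \<in> V (4*k+2). dotp (4*k+2) x x = \<zero>}"
    and big: "real (card A) \<ge> real q ^ (2*k+1)"
  shows "\<exists>x\<in>A. real q \<le> 3 * real (card ((\<lambda>y. dotp (4*k+2) x y) ` A))"
proof -
  let ?d = "4*k+2"
  define S0 where "S0 = {x \<in> V ?d. dotp ?d x x = \<zero>}"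
  have fS0: "finite S0" unfolding S0_def using finite_V by simp
  have AS: "A \<subseteq> S0" using A S0_def by simp
  have AV: "A \<subseteq> V ?d" using AS S0_def by auto
  have fA: "finite A" using AS fS0 finite_subset by blast
  define nA where "nA = real (card A)"
  define Q where "Q = real q"
  have Q3: "Q \<ge> 3" using q_ge3 Q_def by simp
  have nApos: "nA \<ge> Q ^ (2*k+1)" using big nA_def Q_def by simp
  have Qp: "Q ^ (2*k+1) \<ge> 1" using Q3 by (intro one_le_power) simp
  have nA1: "nA \<ge> 1" using nApos Qp by simp
  define nu where "nu = (\<lambda>x t. real (card {y \<in> A. dotp ?d x y = t}))"
  define E where "E = (\<lambda>x. \<Sum>t\<in>carrier R. (nu x t)^2)"
  have sum_nu: "(\<Sum>t\<in>carrier R. nu x t) = nA" if "x \<in> V ?d" for x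
    unfolding nu_def nA_def using nu_sum[OF AV fA that] .
  have var: "E x - nA^2 / Q \<ge> 0" if x: "x \<in> V ?d" for x
  proof -
    define c where "c = nA / Q"
    have "0 \<le> (\<Sum>t\<in>carrier R. (nu x t - c)^2)" by (intro sum_nonneg) auto
    also have "\<dots> = (\<Sum>t\<in>carrier R. (nu x t)^2 - (2 * c) * nu x t + c^2)"
      by (rule sum.cong[OF refl]) (simp add: power2_diff algebra_simps)
    also have "\<dots> = (\<Sum>t\<in>carrier R. (nu x t)^2) - (2 * c) * (\<Sum>t\<in>carrier R. nu x t) + Q * c^2"
      unfolding Q_def by (simp add: sum.distrib sum_subtractf sum_distrib_left)
    also have "\<dots> = E x - nA^2 / Q" using sum_nu[OF x] Q3 unfolding E_def c_def by (simp add: power2_eq_square field_simps)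
    finally show ?thesis .
  qed
  have ES: "(\<Sum>x\<in>S0. E x) \<le> nA * real (card S0) + nA^2 * Q ^ (4*k)"
  proof -
    have "(\<Sum>x\<in>S0. E x) = (\<Sum>x\<in>S0. \<Sum>y\<in>A. \<Sum>y'\<in>A. if dotp ?d x y = dotp ?d x y' then 1 else 0)"
      unfolding E_def nu_def by (intro sum.cong[OF refl] nu_sq_sum[OF AV fA]) (use S0_def in auto)
    also have "\<dots> = (\<Sum>y\<in>A. \<Sum>y'\<in>A. \<Sum>x\<in>S0. if dotp ?d x y = dotp ?d x y' then 1 else 0)"
      by (simp add: sum.swap[of _ S0])
    also have "\<dots> = (\<Sum>y\<in>A. \<Sum>y'\<in>A. real (card {x \<in> S0. dotp ?d x y = dotp ?d x y'}))"
      using card_as_sum[OF fS0] by simp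
    also have "\<dots> \<le> (\<Sum>y\<in>A. \<Sum>y'\<in>A. (if y = y' then real (card S0) else 0) + Q ^ (4*k))"
    proof (intro sum_mono)
      fix y y' assume y: "y \<in> A" and y': "y' \<in> A"
      show "real (card {x \<in> S0. dotp ?d x y = dotp ?d x y'}) \<le> (if y = y' then real (card S0) else 0) + Q ^ (4*k)"
      proof (cases "y = y'")
        case True
        thus ?thesis using Q3 by simp
      next
        case False
        have "{x \<in> S0. dotp ?d x y = dotp ?d x y'} = {x \<in> V ?d. dotp ?d x x = \<zero> \<and> dotp ?d x y = dotp ?d x y'}"
          unfolding S0_def by auto
        thus ?thesis using pair_bound[OF k _ _ False] y y' AV False Q_def by auto
      qed
    qed
    also have "\<dots> = (\<Sum>y\<in>A. real (card S0) + nA * Q ^ (4*k))"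
    proof (rule sum.cong[OF refl])
      fix y assume y: "y \<in> A"
      have "(\<Sum>y'\<in>A. (if y = y' then real (card S0) else 0) + Q ^ (4*k))
          = (\<Sum>y'\<in>A. if y = y' then real (card S0) else 0) + nA * Q ^ (4*k)"
        by (simp add: sum.distrib nA_def)
      also have "(\<Sum>y'\<in>A. if y = y' then real (card S0) else 0) = real (card S0)"
        using fA y by (simp add: sum.delta)
      finally show "(\<Sum>y'\<in>A. (if y = y' then real (card S0) else 0) + Q ^ (4*k)) = real (card S0) + nA * Q ^ (4*k)" .
    qed
    also have "\<dots> = nA * real (card S0) + nA^2 * Q ^ (4*k)"
      by (simp add: nA_def power2_eq_square algebra_simps)
    finally show ?thesis .
  qed
  have cS0: "real (card S0) = Q ^ (4*k+1) - (Q - 1) * Q ^ (2*k)"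
    unfolding S0_def Q_def by (rule card_S0)
  have EA: "(\<Sum>x\<in>A. E x) \<le> 3 * nA^3 / Q"
  proof -
    have "(\<Sum>x\<in>A. E x - nA^2 / Q) \<le> (\<Sum>x\<in>S0. E x - nA^2 / Q)"
      by (rule sum_mono2[OF fS0 AS]) (use var S0_def in auto)
    also have "\<dots> = (\<Sum>x\<in>S0. E x) - real (card S0) * nA^2 / Q" by (simp add: sum_subtractf)
    also have "\<dots> \<le> nA * real (card S0) + nA^2 * Q ^ (4*k) - real (card S0) * nA^2 / Q" using ES by simp
    finally have h1: "(\<Sum>x\<in>A. E x) - nA * (nA^2 / Q) \<le> nA * real (card S0) + nA^2 * (Q ^ (4*k) - real (card S0) / Q)"
      by (simp add: sum_subtractf nA_def algebra_simps)
    have c1: "real (card S0) \<le> Q ^ (4*k+1)" using cS0 Q3 by simp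
    have c2: "Q ^ (4*k) - real (card S0) / Q \<le> Q ^ (2*k)"
    proof -
      have "Q ^ (4*k) - real (card S0) / Q = (Q - 1) * Q ^ (2*k) / Q"
        using cS0 Q3 by (simp add: field_simps)
      also have "\<dots> \<le> Q ^ (2*k)" using Q3 by (simp add: field_simps)
      finally show ?thesis .
    qed
    have nA0: "nA \<ge> 0" using nA1 by simp
    have "nA * real (card S0) \<le> nA * Q ^ (4*k+1)" by (rule mult_left_mono[OF c1 nA0])
    also have "\<dots> \<le> nA^3 / Q"
    proof -
      have "Q ^ (4*k+2) = (Q ^ (2*k+1))^2" unfolding power_mult[symmetric] by (simp add: algebra_simps)
      also have "\<dots> \<le> nA^2" using nApos Qp by (intro power_mono) auto
      finally have "Q * Q ^ (4*k+1) \<le> nA^2" by simp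
      hence "nA * (Q * Q ^ (4*k+1)) \<le> nA * nA^2" using nA0 by (rule mult_left_mono)
      thus ?thesis using Q3 by (simp add: field_simps power2_eq_square power3_eq_cube)
    qed
    finally have t1: "nA * real (card S0) \<le> nA^3 / Q" .
    have "nA^2 * (Q ^ (4*k) - real (card S0) / Q) \<le> nA^2 * Q ^ (2*k)" using c2 by (simp add: mult_left_mono)
    also have "\<dots> \<le> nA^3 / Q"
    proof -
      have "Q * Q ^ (2*k) \<le> nA" using nApos by simp
      hence "nA^2 * (Q * Q ^ (2*k)) \<le> nA^2 * nA" by (simp add: mult_left_mono)
      thus ?thesis using Q3 by (simp add: field_simps power2_eq_square power3_eq_cube)
    qed
    finally have t2: "nA^2 * (Q ^ (4*k) - real (card S0) / Q) \<le> nA^3 / Q" .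
    have eq: "nA * (nA^2 / Q) = nA^3 / Q" by (simp add: power2_eq_square power3_eq_cube)
    show ?thesis using h1 t1 t2 eq by linarith
  qed
  have "\<exists>x\<in>A. E x \<le> 3 * nA^2 / Q"
  proof (rule ccontr)
    assume "\<not> (\<exists>x\<in>A. E x \<le> 3 * nA^2 / Q)"
    hence lt: "\<And>x. x \<in> A \<Longrightarrow> 3 * nA^2 / Q < E x" by force
    have Ane: "A \<noteq> {}" using nA1 nA_def by auto
    have "(\<Sum>x\<in>A. 3 * nA^2 / Q) < (\<Sum>x\<in>A. E x)" using sum_strict_mono[OF fA Ane lt] by simp
    moreover have "(\<Sum>x\<in>A. 3 * nA^2 / Q) = 3 * nA^3 / Q"
    proof -
      have "(\<Sum>x\<in>A. 3 * nA^2 / Q) = nA * (3 * nA^2 / Q)" using nA_def by simp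
      also have "\<dots> = 3 * nA^3 / Q" by (simp add: power2_eq_square power3_eq_cube)
      finally show ?thesis .
    qed
    ultimately show False using EA by linarith
  qed
  then obtain x where xA: "x \<in> A" and Ex: "E x \<le> 3 * nA^2 / Q" by blast
  have xV: "x \<in> V ?d" using xA AV by auto
  define T where "T = (\<lambda>y. dotp ?d x y) ` A"
  have fT: "finite T" using fA T_def by simp
  have Tc: "T \<subseteq> carrier R" using T_def dotp_closed[OF xV] AV by auto
  have zero_out: "nu x t = 0" if tt: "t \<in> carrier R - T" for t
  proof -
    have h: "{y \<in> A. dotp ?d x y = t} = {}" using tt T_def by auto
    show ?thesis unfolding nu_def by (simp only: h card.empty of_nat_0)
  qed
  have "nA = (\<Sum>t\<in>carrier R. nu x t)" using sum_nu[OF xV] by simp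
  also have "\<dots> = (\<Sum>t\<in>T. nu x t)"
    by (rule sum.mono_neutral_right[OF fin Tc]) (use zero_out in auto)
  finally have sT: "nA = (\<Sum>t\<in>T. nu x t)" .
  have "(\<Sum>t\<in>T. (nu x t)^2) \<le> E x"
    unfolding E_def by (rule sum_mono2[OF fin Tc]) auto
  hence "nA^2 \<le> real (card T) * E x" using cs_sum[OF fT, of "nu x"] sT
    by (metis (no_types, lifting) mult_left_mono of_nat_0_le_iff order_trans)
  also have "\<dots> \<le> real (card T) * (3 * nA^2 / Q)" by (rule mult_left_mono[OF Ex]) simp
  finally have "nA^2 * Q \<le> real (card T) * 3 * nA^2" using Q3 by (simp add: field_simps)
  hence "Q \<le> 3 * real (card T)" using nA1 by (simp add: algebra_simps)
  thus ?thesis using xA T_def Q_def by blast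
qed

lemma zero_sphere_eq: "zero_sphere R d = {x \<in> V d. dotp d x x = \<zero>}"
  unfolding zero_sphere_def fvecs_def V_def dotp_def ..

lemma fsqdist_eq:
  assumes x: "x \<in> V d" and y: "y \<in> V d" and Qx: "dotp d x x = \<zero>" and Qy: "dotp d y y = \<zero>"
  shows "fsqdist R d x y = \<ominus> ((\<one> \<oplus> \<one>) \<otimes> dotp d x y)"
proof -
  have m1: "\<ominus> \<one> \<in> carrier R" by simp
  have "fsqdist R d x y = dotp d (lin d x (\<ominus> \<one>) y) (lin d x (\<ominus> \<one>) y)"
    unfolding fsqdist_def dotp_def
  proof (intro finsum_cong')
    fix i assume "i \<in> {..<d}"
    hence i: "i < d" by simp
    have c: "x i \<in> carrier R" "y i \<in> carrier R" using x y i V_carrier by auto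
    have "lin d x (\<ominus> \<one>) y i = x i \<ominus> y i" using lin_apply[OF i] c by (simp add: a_minus_def l_minus)
    thus "(x i \<ominus> y i) \<otimes> (x i \<ominus> y i) = lin d x (\<ominus> \<one>) y i \<otimes> lin d x (\<ominus> \<one>) y i" by simp
  qed (use lin_V[OF x y m1] V_carrier in auto)
  also have "\<dots> = dotp d x x \<oplus> (\<one> \<oplus> \<one>) \<otimes> \<ominus> \<one> \<otimes> dotp d x y \<oplus> \<ominus> \<one> \<otimes> \<ominus> \<one> \<otimes> dotp d y y"
    by (rule Q_lin[OF x y m1])
  also have "\<dots> = \<ominus> ((\<one> \<oplus> \<one>) \<otimes> dotp d x y)" unfolding Qx Qy using dotp_closed[OF x y] by algebra
  finally show ?thesis .
qed

lemma final:
  assumes k: "k > 0" and A: "A \<subseteq> zero_sphere R (4*k+2)"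
    and big: "real (card A) \<ge> 1 * real q ^ (2*k+1)"
  shows "real (card (dist_set R (4*k+2) A)) \<ge> 1/3 * real q"
proof -
  let ?d = "4*k+2"
  have A': "A \<subseteq> {x \<in> V ?d. dotp ?d x x = \<zero>}" using A zero_sphere_eq by simp
  obtain x where xA: "x \<in> A" and cT: "real q \<le> 3 * real (card ((\<lambda>y. dotp ?d x y) ` A))"
    using main_count[OF k A'] big by auto
  have xV: "x \<in> V ?d" and Qx: "dotp ?d x x = \<zero>" using xA A' by auto
  define T where "T = (\<lambda>y. dotp ?d x y) ` A"
  define g where "g = (\<lambda>t. \<ominus> ((\<one> \<oplus> \<one>) \<otimes> t))"
  have Tc: "T \<subseteq> carrier R" using T_def dotp_closed[OF xV] A' by auto
  have inj: "inj_on g T"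
  proof (rule inj_onI)
    fix s t assume s: "s \<in> T" and t: "t \<in> T" and e: "g s = g t"
    have sc: "s \<in> carrier R" and tc: "t \<in> carrier R" using s t Tc by auto
    have "(\<one> \<oplus> \<one>) \<otimes> s = (\<one> \<oplus> \<one>) \<otimes> t" using e sc tc unfolding g_def by (metis add.inv_inv m_closed two_closed)
    thus "s = t" using m_lcancel[OF two_ne_zero two_closed sc tc] by simp
  qed
  have sub: "g ` T \<subseteq> dist_set R ?d A"
  proof
    fix z assume "z \<in> g ` T"
    then obtain y where yA: "y \<in> A" and z: "z = g (dotp ?d x y)" unfolding T_def by auto
    have yV: "y \<in> V ?d" and Qy: "dotp ?d y y = \<zero>" using yA A' by auto
    have "z = fsqdist R ?d x y" using fsqdist_eq[OF xV yV Qx Qy] z g_def by simp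
    thus "z \<in> dist_set R ?d A" unfolding dist_set_def using xA yA by blast
  qed
  have fD: "finite (dist_set R ?d A)"
  proof (rule finite_subset[OF _ fin])
    show "dist_set R ?d A \<subseteq> carrier R"
    proof
      fix z assume "z \<in> dist_set R ?d A"
      then obtain a b where "a \<in> A" "b \<in> A" "z = fsqdist R ?d a b" unfolding dist_set_def by blast
      moreover have "a \<in> V ?d" "b \<in> V ?d" using \<open>a \<in> A\<close> \<open>b \<in> A\<close> A' by auto
      moreover have "fsqdist R ?d a b \<in> carrier R" unfolding fsqdist_def
        by (intro finsum_closed) (use \<open>a \<in> V ?d\<close> \<open>b \<in> V ?d\<close> in \<open>auto simp: V_carrier\<close>)
      ultimately show "z \<in> carrier R" by simp
    qed
  qed
  have "card T = card (g ` T)" using card_image[OF inj] by simp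
  also have "\<dots> \<le> card (dist_set R ?d A)" using card_mono[OF fD sub] .
  finally show ?thesis using cT T_def by simp
qed
end

theorem corollary1p22:
  shows "\<forall>k::nat. k > 0 \<longrightarrow>
    (\<exists>C::real. \<exists>c::real. C > 0 \<and> c > 0 \<and>
      (\<forall>(R::'a ring) (A::(nat \<Rightarrow> 'a) set).
         field R \<and> finite (carrier R) \<and>
         (\<exists>p n::nat. Factorial_Ring.prime p \<and> odd p \<and> n > 0 \<and> card (carrier R) = p ^ n) \<and>
         card (carrier R) mod 4 = 3 \<and>
         A \<subseteq> zero_sphere R (4 * k + 2) \<and>
         real (card A) \<ge> C * real (card (carrier R)) ^ (2 * k + 1)
         \<longrightarrow> real (card (dist_set R (4 * k + 2) A)) \<ge> c * real (card (carrier R))))"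
proof (intro allI impI)
  fix k :: nat assume k: "k > 0"
  show "\<exists>C::real. \<exists>c::real. C > 0 \<and> c > 0 \<and>
      (\<forall>(R::'a ring) (A::(nat \<Rightarrow> 'a) set).
         field R \<and> finite (carrier R) \<and>
         (\<exists>p n::nat. Factorial_Ring.prime p \<and> odd p \<and> n > 0 \<and> card (carrier R) = p ^ n) \<and>
         card (carrier R) mod 4 = 3 \<and>
         A \<subseteq> zero_sphere R (4 * k + 2) \<and>
         real (card A) \<ge> C * real (card (carrier R)) ^ (2 * k + 1)
         \<longrightarrow> real (card (dist_set R (4 * k + 2) A)) \<ge> c * real (card (carrier R)))"
  proof (intro exI conjI allI impI)
    show "(1::real) > 0" by simp
    show "(1/3::real) > 0" by simp
    fix R :: "'a ring" and A :: "(nat \<Rightarrow> 'a) set"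
    assume h: "field R \<and> finite (carrier R) \<and>
         (\<exists>p n::nat. Factorial_Ring.prime p \<and> odd p \<and> n > 0 \<and> card (carrier R) = p ^ n) \<and>
         card (carrier R) mod 4 = 3 \<and>
         A \<subseteq> zero_sphere R (4 * k + 2) \<and>
         real (card A) \<ge> 1 * real (card (carrier R)) ^ (2 * k + 1)"
    interpret qfield R
      using h by (simp add: qfield_def qfield_axioms_def)
    show "real (card (dist_set R (4 * k + 2) A)) \<ge> 1/3 * real (card (carrier R))"
      using final[OF k] h by blast
  qed
qed

end
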